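(* Let $H$ be a finite-dimensional Hopf algebra over a field $\Bbbk$ (algebraically closed of characteristic zero) and $A$ a Hopf subalgebra of $H$. Suppose $H=A\oplus C$ as coalgebras for some subcoalgebra $C$ of $H$. Then $H$ and $A$ have the same distinguished group-like element.
   Context: The distinguished group-like element of a finite-dimensional Hopf algebra $H$ is the $a\in G(H)$ with $\lambda(h_2)h_1=\lambda(h)\,a$ for all $h\in H$, where $\lambda$ is a nonzero right integral of $H^*$. *)

theory Defs
  imports "HOL-Computational_Algebra.Polynomial"
begin

text \<open>A finite-dimensional Hopf algebra over a field 'k is presented by a finite basis
  indexed by the finite type 'i together with its structure constants. Elements of H are
  coordinate vectors 'i \<Rightarrow> 'k, elements of H\<otimes>H are 'i \<times> 'i \<Rightarrow> 'k, and
  elements of H\<otimes>H\<otimes>H are 'i \<times> 'i \<times> 'i \<Rightarrow> 'k.\<close>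

record ('i, 'k) hopf_data =
  mc :: "'i \<Rightarrow> 'i \<Rightarrow> 'i \<Rightarrow> 'k"   \<comment> \<open>e_i e_j = sum_l mc i j l e_l\<close>
  uc :: "'i \<Rightarrow> 'k"                \<comment> \<open>1 = sum_i uc i e_i\<close>
  cc :: "'i \<Rightarrow> 'i \<Rightarrow> 'i \<Rightarrow> 'k"   \<comment> \<open>Delta e_l = sum_{i,j} cc l i j e_i \<otimes> e_j\<close>
  ec :: "'i \<Rightarrow> 'k"                \<comment> \<open>epsilon e_l = ec l\<close>
  sc :: "'i \<Rightarrow> 'i \<Rightarrow> 'k"         \<comment> \<open>S e_i = sum_j sc i j e_j\<close>

type_synonym ('i, 'k) vec = "'i \<Rightarrow> 'k"

definition bvec :: "'i \<Rightarrow> 'i \<Rightarrow> 'k::field" where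
  "bvec i = (\<lambda>j. if j = i then 1 else 0)"

definition vadd :: "('i \<Rightarrow> 'k::field) \<Rightarrow> ('i \<Rightarrow> 'k) \<Rightarrow> 'i \<Rightarrow> 'k" where
  "vadd x y = (\<lambda>i. x i + y i)"

definition vscale :: "'k::field \<Rightarrow> ('i \<Rightarrow> 'k) \<Rightarrow> 'i \<Rightarrow> 'k" where
  "vscale c x = (\<lambda>i. c * x i)"

definition hmul :: "('i::finite, 'k::field) hopf_data \<Rightarrow> ('i \<Rightarrow> 'k) \<Rightarrow> ('i \<Rightarrow> 'k) \<Rightarrow> 'i \<Rightarrow> 'k" where
  "hmul H x y = (\<lambda>l. \<Sum>i\<in>UNIV. \<Sum>j\<in>UNIV. x i * y j * mc H i j l)"

definition hone :: "('i::finite, 'k::field) hopf_data \<Rightarrow> 'i \<Rightarrow> 'k" where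
  "hone H = uc H"

definition hcomul :: "('i::finite, 'k::field) hopf_data \<Rightarrow> ('i \<Rightarrow> 'k) \<Rightarrow> 'i \<times> 'i \<Rightarrow> 'k" where
  "hcomul H x = (\<lambda>(i, j). \<Sum>l\<in>UNIV. x l * cc H l i j)"

definition hcounit :: "('i::finite, 'k::field) hopf_data \<Rightarrow> ('i \<Rightarrow> 'k) \<Rightarrow> 'k" where
  "hcounit H x = (\<Sum>l\<in>UNIV. x l * ec H l)"

definition hanti :: "('i::finite, 'k::field) hopf_data \<Rightarrow> ('i \<Rightarrow> 'k) \<Rightarrow> 'i \<Rightarrow> 'k" where
  "hanti H x = (\<lambda>j. \<Sum>i\<in>UNIV. x i * sc H i j)"

definition tens :: "('i \<Rightarrow> 'k::field) \<Rightarrow> ('i \<Rightarrow> 'k) \<Rightarrow> 'i \<times> 'i \<Rightarrow> 'k" where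
  "tens x y = (\<lambda>(i, j). x i * y j)"

definition tmul :: "('i::finite, 'k::field) hopf_data \<Rightarrow> ('i \<times> 'i \<Rightarrow> 'k) \<Rightarrow> ('i \<times> 'i \<Rightarrow> 'k) \<Rightarrow> 'i \<times> 'i \<Rightarrow> 'k" where
  "tmul H t u = (\<lambda>(i, j). \<Sum>(p, q)\<in>UNIV. \<Sum>(r, s)\<in>UNIV.
      t (p, q) * u (r, s) * mc H p r i * mc H q s j)"

definition comul_id :: "('i::finite, 'k::field) hopf_data \<Rightarrow> ('i \<times> 'i \<Rightarrow> 'k) \<Rightarrow> 'i \<times> 'i \<times> 'i \<Rightarrow> 'k" where
  "comul_id H t = (\<lambda>(i, j, l). \<Sum>p\<in>UNIV. t (p, l) * cc H p i j)"

definition id_comul :: "('i::finite, 'k::field) hopf_data \<Rightarrow> ('i \<times> 'i \<Rightarrow> 'k) \<Rightarrow> 'i \<times> 'i \<times> 'i \<Rightarrow> 'k" where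
  "id_comul H t = (\<lambda>(i, j, l). \<Sum>p\<in>UNIV. t (i, p) * cc H p j l)"

text \<open>(f \<otimes> id) and (id \<otimes> f) for a linear functional f given by its values on the basis\<close>
definition fun_id :: "('i::finite \<Rightarrow> 'k::field) \<Rightarrow> ('i \<times> 'i \<Rightarrow> 'k) \<Rightarrow> 'i \<Rightarrow> 'k" where
  "fun_id f t = (\<lambda>j. \<Sum>i\<in>UNIV. f i * t (i, j))"

definition id_fun :: "('i::finite \<Rightarrow> 'k::field) \<Rightarrow> ('i \<times> 'i \<Rightarrow> 'k) \<Rightarrow> 'i \<Rightarrow> 'k" where
  "id_fun f t = (\<lambda>i. \<Sum>j\<in>UNIV. t (i, j) * f j)"

definition mul_S_id :: "('i::finite, 'k::field) hopf_data \<Rightarrow> ('i \<times> 'i \<Rightarrow> 'k) \<Rightarrow> 'i \<Rightarrow> 'k" where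
  "mul_S_id H t = (\<lambda>l. \<Sum>(i, j)\<in>UNIV. t (i, j) * hmul H (hanti H (bvec i)) (bvec j) l)"

definition mul_id_S :: "('i::finite, 'k::field) hopf_data \<Rightarrow> ('i \<times> 'i \<Rightarrow> 'k) \<Rightarrow> 'i \<Rightarrow> 'k" where
  "mul_id_S H t = (\<lambda>l. \<Sum>(i, j)\<in>UNIV. t (i, j) * hmul H (bvec i) (hanti H (bvec j)) l)"

definition fval :: "('i::finite \<Rightarrow> 'k::field) \<Rightarrow> ('i \<Rightarrow> 'k) \<Rightarrow> 'k" where
  "fval f x = (\<Sum>i\<in>UNIV. f i * x i)"

definition is_hopf :: "('i::finite, 'k::field) hopf_data \<Rightarrow> bool" where
  "is_hopf H \<longleftrightarrow>
     (\<forall>x y z. hmul H (hmul H x y) z = hmul H x (hmul H y z)) \<and>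
     (\<forall>x. hmul H (hone H) x = x \<and> hmul H x (hone H) = x) \<and>
     (\<forall>x. comul_id H (hcomul H x) = id_comul H (hcomul H x)) \<and>
     (\<forall>x. fun_id (ec H) (hcomul H x) = x \<and> id_fun (ec H) (hcomul H x) = x) \<and>
     (\<forall>x y. hcomul H (hmul H x y) = tmul H (hcomul H x) (hcomul H y)) \<and>
     hcomul H (hone H) = tens (hone H) (hone H) \<and>
     (\<forall>x y. hcounit H (hmul H x y) = hcounit H x * hcounit H y) \<and>
     hcounit H (hone H) = 1 \<and>
     (\<forall>x. mul_S_id H (hcomul H x) = vscale (hcounit H x) (hone H)) \<and>
     (\<forall>x. mul_id_S H (hcomul H x) = vscale (hcounit H x) (hone H))"

definition is_subspace :: "('i \<Rightarrow> 'k::field) set \<Rightarrow> bool" where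
  "is_subspace A \<longleftrightarrow> (\<lambda>i. 0) \<in> A \<and> (\<forall>x\<in>A. \<forall>y\<in>A. vadd x y \<in> A) \<and> (\<forall>c. \<forall>x\<in>A. vscale c x \<in> A)"

text \<open>A \<otimes> A as a subspace of H \<otimes> H (A a subspace): sums of pure tensors a \<otimes> b with a, b \<in> A\<close>
definition tensor_sub :: "('i \<Rightarrow> 'k::field) set \<Rightarrow> ('i \<times> 'i \<Rightarrow> 'k) set" where
  "tensor_sub A = {t. \<exists>(n::nat) a b. (\<forall>k<n. a k \<in> A \<and> b k \<in> A) \<and>
                       t = (\<lambda>(i, j). \<Sum>k<n. a k i * b k j)}"

definition hopf_subalgebra :: "('i::finite, 'k::field) hopf_data \<Rightarrow> ('i \<Rightarrow> 'k) set \<Rightarrow> bool" where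
  "hopf_subalgebra H A \<longleftrightarrow> is_subspace A \<and> hone H \<in> A \<and>
     (\<forall>x\<in>A. \<forall>y\<in>A. hmul H x y \<in> A) \<and>
     (\<forall>x\<in>A. hcomul H x \<in> tensor_sub A) \<and> (\<forall>x\<in>A. hanti H x \<in> A)"

definition subcoalgebra :: "('i::finite, 'k::field) hopf_data \<Rightarrow> ('i \<Rightarrow> 'k) set \<Rightarrow> bool" where
  "subcoalgebra H C \<longleftrightarrow> is_subspace C \<and> (\<forall>x\<in>C. hcomul H x \<in> tensor_sub C)"

text \<open>group-like elements of the Hopf subalgebra A (A = UNIV gives G(H))\<close>
definition grouplike :: "('i::finite, 'k::field) hopf_data \<Rightarrow> ('i \<Rightarrow> 'k) set \<Rightarrow> ('i \<Rightarrow> 'k) \<Rightarrow> bool" where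
  "grouplike H A g \<longleftrightarrow> g \<in> A \<and> g \<noteq> (\<lambda>i. 0) \<and> hcomul H g = tens g g"

text \<open>lam (a functional on H, only its restriction to A matters) restricts to a nonzero
  right integral of A*, i.e. lam(h_1) h_2 = lam(h) 1 for all h \<in> A\<close>
definition right_integral :: "('i::finite, 'k::field) hopf_data \<Rightarrow> ('i \<Rightarrow> 'k) set \<Rightarrow> ('i \<Rightarrow> 'k) \<Rightarrow> bool" where
  "right_integral H A lam \<longleftrightarrow> (\<exists>h\<in>A. fval lam h \<noteq> 0) \<and>
     (\<forall>h\<in>A. fun_id lam (hcomul H h) = vscale (fval lam h) (hone H))"

definition dist_grouplike :: "('i::finite, 'k::field) hopf_data \<Rightarrow> ('i \<Rightarrow> 'k) set \<Rightarrow> ('i \<Rightarrow> 'k) \<Rightarrow> bool" where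
  "dist_grouplike H A a \<longleftrightarrow> grouplike H A a \<and>
     (\<exists>lam. right_integral H A lam \<and>
        (\<forall>h\<in>A. id_fun lam (hcomul H h) = vscale (fval lam h) a))"

end

theory Submission
  imports Defs Complex_Main "HOL-Library.Function_Algebras"
begin

definition fscale :: "'k::field \<Rightarrow> ('i \<Rightarrow> 'k) \<Rightarrow> 'i \<Rightarrow> 'k" where
  "fscale c x = (\<lambda>i. c * x i)"

definition ebv :: "'i \<Rightarrow> 'i \<Rightarrow> 'k::field" where
  "ebv i = (\<lambda>j. if j = i then 1 else 0)"

lemma fscale_vs: "vector_space (fscale :: 'k::field \<Rightarrow> ('i \<Rightarrow> 'k) \<Rightarrow> _)"
  by unfold_locales (auto simp: fscale_def algebra_simps fun_eq_iff)

lemma sum_fun_apply': "(\<Sum>x\<in>A. f x) i = (\<Sum>x\<in>A. f x i)"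
  by (induction A rule: infinite_finite_induct) auto

lemma sum_delta_r [simp]: "(\<Sum>j\<in>(UNIV::'i::finite set). g j * (if i = j then (1::'k::field) else 0)) = g i"
  by (simp add: if_distrib[of "\<lambda>x. g _ * x"] cong: if_cong)
lemma sum_delta_r' [simp]: "(\<Sum>j\<in>(UNIV::'i::finite set). g j * (if j = i then (1::'k::field) else 0)) = g i"
  by (simp add: if_distrib[of "\<lambda>x. g _ * x"] cong: if_cong)
lemma sum_delta_l [simp]: "(\<Sum>j\<in>(UNIV::'i::finite set). (if i = j then (1::'k::field) else 0) * g j) = g i"
  by (simp add: if_distrib[of "\<lambda>x. x * g _"] cong: if_cong)
lemma sum_delta_l' [simp]: "(\<Sum>j\<in>(UNIV::'i::finite set). (if j = i then (1::'k::field) else 0) * g j) = g i"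
  by (simp add: if_distrib[of "\<lambda>x. x * g _"] cong: if_cong)

lemma fscale_fdvs: "finite_dimensional_vector_space (fscale :: 'k::field \<Rightarrow> ('i::finite \<Rightarrow> 'k) \<Rightarrow> _) (range ebv)"
proof -
  interpret vector_space "fscale :: 'k::field \<Rightarrow> ('i::finite \<Rightarrow> 'k) \<Rightarrow> _" by (rule fscale_vs)
  have inj: "inj (ebv :: 'i \<Rightarrow> 'i \<Rightarrow> 'k)"
    by (auto simp: inj_def ebv_def fun_eq_iff split: if_splits)
  show ?thesis
  proof
    show "finite (range (ebv :: 'i \<Rightarrow> 'i \<Rightarrow> 'k))" by simp
    show "independent (range (ebv :: 'i \<Rightarrow> 'i \<Rightarrow> 'k))"
    proof (rule independent_if_scalars_zero)
      fix f :: "('i \<Rightarrow> 'k) \<Rightarrow> 'k" and x :: "'i \<Rightarrow> 'k"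
      assume h: "(\<Sum>x\<in>range ebv. fscale (f x) x) = 0" and x: "x \<in> range ebv"
      then obtain i where xi: "x = ebv i" by auto
      have "(\<Sum>x\<in>range (ebv::'i \<Rightarrow> 'i \<Rightarrow> 'k). fscale (f x) x) i = (\<Sum>j\<in>UNIV. fscale (f (ebv j)) (ebv j) i)"
        by (simp add: sum.reindex[OF inj] sum_fun_apply')
      also have "\<dots> = f (ebv i)" by (simp add: fscale_def ebv_def)
      finally show "f x = 0" using h xi by simp
    qed simp
    have "x \<in> range (\<lambda>u. \<Sum>v\<in>range ebv. fscale (u v) v)" for x :: "'i \<Rightarrow> 'k"
    proof -
      have "(\<Sum>v\<in>range ebv. fscale (x (inv ebv v)) v) = (\<Sum>j\<in>UNIV. fscale (x j) (ebv j))"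
        by (simp add: sum.reindex[OF inj] inv_f_f[OF inj])
      also have "\<dots> = x" by (simp add: fun_eq_iff sum_fun_apply' fscale_def ebv_def)
      finally have e: "x = (\<Sum>v\<in>range ebv. fscale (x (inv ebv v)) v)" ..
      show ?thesis by (rule image_eqI[where x="\<lambda>v. x (inv ebv v)" and f="\<lambda>u. \<Sum>v\<in>range ebv. fscale (u v) v", OF e]) (rule UNIV_I)
    qed
    then show "span (range (ebv :: 'i \<Rightarrow> 'i \<Rightarrow> 'k)) = UNIV"
      by (auto simp: span_finite)
  qed
qed

lemma lin_inj_surj:
  fixes f :: "('i::finite \<Rightarrow> 'k::field) \<Rightarrow> ('i \<Rightarrow> 'k)"
  assumes add: "\<And>x y. f (x + y) = f x + f y"
    and sc: "\<And>c x. f (fscale c x) = fscale c (f x)"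
    and inj: "inj f"
  shows "surj f"
proof -
  interpret finite_dimensional_vector_space "fscale :: 'k::field \<Rightarrow> ('i::finite \<Rightarrow> 'k) \<Rightarrow> _" "range ebv"
    by (rule fscale_fdvs)
  have "Vector_Spaces.linear fscale fscale f"
    by unfold_locales (auto simp: add sc)
  then show ?thesis using linear_inj_imp_surj inj by blast
qed


lemma if1_mult [simp]: "(if P then (1::'k::field) else 0) * x = (if P then x else 0)" by simp
lemma mult_if1 [simp]: "x * (if P then (1::'k::field) else 0) = (if P then x else 0)" by simp
lemma ifz_mult [simp]: "(if P then x else (0::'k::field)) * y = (if P then x * y else 0)" by simp
lemma mult_ifz [simp]: "y * (if P then x else (0::'k::field)) = (if P then y * x else 0)" by simp
lemma sum_ifz_const [simp]: "(\<Sum>j\<in>A. if P then f j else (0::'k::field)) = (if P then (\<Sum>j\<in>A. f j) else 0)"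
  by simp

lemma sum_pair_UNIV: "(\<Sum>z\<in>(UNIV::('a::finite \<times> 'b::finite) set). f z) = (\<Sum>x\<in>UNIV. \<Sum>y\<in>UNIV. f (x,y))"
proof -
  have "(\<Sum>x\<in>UNIV. \<Sum>y\<in>UNIV. f (x,y)) = (\<Sum>(x,y)\<in>UNIV \<times> UNIV. f (x,y))"
    by (rule sum.cartesian_product)
  then show ?thesis by simp
qed

lemma bvec_app: "bvec a i = (if i = a then 1 else 0)" by (simp add: bvec_def)

locale hopf =
  fixes H :: "('i::finite, 'k::field) hopf_data"
  assumes hopf: "is_hopf H"
begin

lemma hopf_cmul: "hcomul H (hmul H x y) = tmul H (hcomul H x) (hcomul H y)"
  using hopf unfolding is_hopf_def by blast

abbreviation "m \<equiv> mc H"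
abbreviation "c \<equiv> cc H"
abbreviation "s \<equiv> sc H"
abbreviation "u \<equiv> uc H"
abbreviation "e \<equiv> ec H"

lemma hmul_bvec: "hmul H (bvec a) (bvec b) = m a b"
  by (simp add: hmul_def bvec_app fun_eq_iff)

lemma hcomul_bvec: "hcomul H (bvec a) = (\<lambda>(i,j). c a i j)"
  by (simp add: hcomul_def bvec_app fun_eq_iff)

lemma hanti_bvec: "hanti H (bvec a) = s a"
  by (simp add: hanti_def bvec_app fun_eq_iff)

lemma hcounit_bvec: "hcounit H (bvec a) = e a"
  by (simp add: hcounit_def bvec_app)

lemma assoc: "(\<Sum>l\<in>UNIV. m a b l * m l d n) = (\<Sum>l\<in>UNIV. m b d l * m a l n)"
proof -
  have "hmul H (hmul H (bvec a) (bvec b)) (bvec d) n = hmul H (bvec a) (hmul H (bvec b) (bvec d)) n"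
    using hopf by (simp add: is_hopf_def)
  then show ?thesis by (simp add: hmul_bvec) (simp add: hmul_def bvec_app)
qed

lemma unitL: "(\<Sum>i\<in>UNIV. u i * m i j l) = (if j = l then 1 else 0)"
proof -
  have "hmul H (hone H) (bvec j) l = bvec j l"
    using hopf by (simp add: is_hopf_def)
  then show ?thesis by (simp add: hmul_def bvec_app hone_def)
qed

lemma unitR: "(\<Sum>i\<in>UNIV. u i * m j i l) = (if j = l then 1 else 0)"
proof -
  have "hmul H (bvec j) (hone H) l = bvec j l"
    using hopf by (simp add: is_hopf_def)
  then show ?thesis by (simp add: hmul_def bvec_app hone_def mult.commute)
qed

lemma coassoc: "(\<Sum>p\<in>UNIV. c q p l * c p i j) = (\<Sum>p\<in>UNIV. c q i p * c p j l)"
proof -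
  have "comul_id H (hcomul H (bvec q)) (i,j,l) = id_comul H (hcomul H (bvec q)) (i,j,l)"
    using hopf by (simp add: is_hopf_def)
  then show ?thesis by (simp add: hcomul_bvec comul_id_def id_comul_def)
qed

lemma counitL: "(\<Sum>i\<in>UNIV. e i * c q i j) = (if q = j then 1 else 0)"
proof -
  have "fun_id (ec H) (hcomul H (bvec q)) j = bvec q j"
    using hopf by (simp add: is_hopf_def)
  then show ?thesis by (simp add: hcomul_bvec fun_id_def bvec_app)
qed

lemma counitR: "(\<Sum>j\<in>UNIV. c q i j * e j) = (if q = i then 1 else 0)"
proof -
  have "id_fun (ec H) (hcomul H (bvec q)) i = bvec q i"
    using hopf by (simp add: is_hopf_def)
  then show ?thesis by (simp add: hcomul_bvec id_fun_def bvec_app)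
qed

lemma cmul: "(\<Sum>l\<in>UNIV. m a b l * c l i j) =
   (\<Sum>p\<in>UNIV. \<Sum>q\<in>UNIV. \<Sum>r\<in>UNIV. \<Sum>t\<in>UNIV. c a p q * c b r t * m p r i * m q t j)"
proof -
  have "hcomul H (hmul H (bvec a) (bvec b)) (i,j) = tmul H (hcomul H (bvec a)) (hcomul H (bvec b)) (i,j)"
    by (simp only: hopf_cmul)
  moreover have "hcomul H (hmul H (bvec a) (bvec b)) (i,j) = (\<Sum>l\<in>UNIV. m a b l * c l i j)"
    unfolding hmul_bvec hcomul_def by simp
  moreover have "tmul H (hcomul H (bvec a)) (hcomul H (bvec b)) (i,j) =
   (\<Sum>p\<in>UNIV. \<Sum>q\<in>UNIV. \<Sum>r\<in>UNIV. \<Sum>t\<in>UNIV. c a p q * c b r t * m p r i * m q t j)"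
    unfolding tmul_def hcomul_bvec sum_pair_UNIV by simp
  ultimately show ?thesis by simp
qed

lemma c1: "(\<Sum>l\<in>UNIV. u l * c l i j) = u i * u j"
proof -
  have "hcomul H (hone H) (i,j) = tens (hone H) (hone H) (i,j)"
    using hopf by (simp add: is_hopf_def)
  then show ?thesis by (simp add: hcomul_def hone_def tens_def)
qed

lemma emul: "(\<Sum>l\<in>UNIV. m a b l * e l) = e a * e b"
proof -
  have "hcounit H (hmul H (bvec a) (bvec b)) = hcounit H (bvec a) * hcounit H (bvec b)"
    using hopf by (simp add: is_hopf_def)
  then show ?thesis by (simp add: hmul_bvec hcounit_bvec) (simp add: hcounit_def)
qed

lemma e1: "(\<Sum>l\<in>UNIV. u l * e l) = 1"
  using hopf by (simp add: is_hopf_def hcounit_def hone_def)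

lemma antiL: "(\<Sum>i\<in>UNIV. \<Sum>j\<in>UNIV. c q i j * (\<Sum>p\<in>UNIV. s i p * m p j l)) = e q * u l"
proof -
  have "mul_S_id H (hcomul H (bvec q)) l = vscale (hcounit H (bvec q)) (hone H) l"
    using hopf by (simp add: is_hopf_def)
  then show ?thesis
    by (simp add: hcomul_bvec hcounit_bvec mul_S_id_def hanti_bvec hone_def vscale_def
        sum_pair_UNIV) (simp add: hmul_def bvec_app)
qed

lemma antiR: "(\<Sum>i\<in>UNIV. \<Sum>j\<in>UNIV. c q i j * (\<Sum>p\<in>UNIV. s j p * m i p l)) = e q * u l"
proof -
  have "mul_id_S H (hcomul H (bvec q)) l = vscale (hcounit H (bvec q)) (hone H) l"
    using hopf by (simp add: is_hopf_def)
  then show ?thesis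
    by (simp add: hcomul_bvec hcounit_bvec mul_id_S_def hanti_bvec hone_def vscale_def
        sum_pair_UNIV) (simp add: hmul_def bvec_app)
qed

end

lemma mv1: "(\<Sum>l\<in>A. \<Sum>i1\<in>B1. f l i1) = (\<Sum>i1\<in>B1. \<Sum>l\<in>A. f l i1)"
  by (rule sum.swap)
lemma mv2: "(\<Sum>l\<in>A. \<Sum>i1\<in>B1. \<Sum>i2\<in>B2. f l i1 i2) = (\<Sum>i1\<in>B1. \<Sum>i2\<in>B2. \<Sum>l\<in>A. f l i1 i2)"
  by (subst sum.swap) (rule sum.cong[OF refl], rule mv1)
lemma mv3: "(\<Sum>l\<in>A. \<Sum>i1\<in>B1. \<Sum>i2\<in>B2. \<Sum>i3\<in>B3. f l i1 i2 i3) = (\<Sum>i1\<in>B1. \<Sum>i2\<in>B2. \<Sum>i3\<in>B3. \<Sum>l\<in>A. f l i1 i2 i3)"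
  by (subst sum.swap) (rule sum.cong[OF refl], rule mv2)
lemma mv4: "(\<Sum>l\<in>A. \<Sum>i1\<in>B1. \<Sum>i2\<in>B2. \<Sum>i3\<in>B3. \<Sum>i4\<in>B4. f l i1 i2 i3 i4) = (\<Sum>i1\<in>B1. \<Sum>i2\<in>B2. \<Sum>i3\<in>B3. \<Sum>i4\<in>B4. \<Sum>l\<in>A. f l i1 i2 i3 i4)"
  by (subst sum.swap) (rule sum.cong[OF refl], rule mv3)
lemma mv5: "(\<Sum>l\<in>A. \<Sum>i1\<in>B1. \<Sum>i2\<in>B2. \<Sum>i3\<in>B3. \<Sum>i4\<in>B4. \<Sum>i5\<in>B5. f l i1 i2 i3 i4 i5) = (\<Sum>i1\<in>B1. \<Sum>i2\<in>B2. \<Sum>i3\<in>B3. \<Sum>i4\<in>B4. \<Sum>i5\<in>B5. \<Sum>l\<in>A. f l i1 i2 i3 i4 i5)"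
  by (subst sum.swap) (rule sum.cong[OF refl], rule mv4)
lemma mv6: "(\<Sum>l\<in>A. \<Sum>i1\<in>B1. \<Sum>i2\<in>B2. \<Sum>i3\<in>B3. \<Sum>i4\<in>B4. \<Sum>i5\<in>B5. \<Sum>i6\<in>B6. f l i1 i2 i3 i4 i5 i6) = (\<Sum>i1\<in>B1. \<Sum>i2\<in>B2. \<Sum>i3\<in>B3. \<Sum>i4\<in>B4. \<Sum>i5\<in>B5. \<Sum>i6\<in>B6. \<Sum>l\<in>A. f l i1 i2 i3 i4 i5 i6)"
  by (subst sum.swap) (rule sum.cong[OF refl], rule mv5)
lemma mv7: "(\<Sum>l\<in>A. \<Sum>i1\<in>B1. \<Sum>i2\<in>B2. \<Sum>i3\<in>B3. \<Sum>i4\<in>B4. \<Sum>i5\<in>B5. \<Sum>i6\<in>B6. \<Sum>i7\<in>B7. f l i1 i2 i3 i4 i5 i6 i7) = (\<Sum>i1\<in>B1. \<Sum>i2\<in>B2. \<Sum>i3\<in>B3. \<Sum>i4\<in>B4. \<Sum>i5\<in>B5. \<Sum>i6\<in>B6. \<Sum>i7\<in>B7. \<Sum>l\<in>A. f l i1 i2 i3 i4 i5 i6 i7)"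
  by (subst sum.swap) (rule sum.cong[OF refl], rule mv6)
lemma mv8: "(\<Sum>l\<in>A. \<Sum>i1\<in>B1. \<Sum>i2\<in>B2. \<Sum>i3\<in>B3. \<Sum>i4\<in>B4. \<Sum>i5\<in>B5. \<Sum>i6\<in>B6. \<Sum>i7\<in>B7. \<Sum>i8\<in>B8. f l i1 i2 i3 i4 i5 i6 i7 i8) = (\<Sum>i1\<in>B1. \<Sum>i2\<in>B2. \<Sum>i3\<in>B3. \<Sum>i4\<in>B4. \<Sum>i5\<in>B5. \<Sum>i6\<in>B6. \<Sum>i7\<in>B7. \<Sum>i8\<in>B8. \<Sum>l\<in>A. f l i1 i2 i3 i4 i5 i6 i7 i8)"
  by (subst sum.swap) (rule sum.cong[OF refl], rule mv7)
lemma mv9: "(\<Sum>l\<in>A. \<Sum>i1\<in>B1. \<Sum>i2\<in>B2. \<Sum>i3\<in>B3. \<Sum>i4\<in>B4. \<Sum>i5\<in>B5. \<Sum>i6\<in>B6. \<Sum>i7\<in>B7. \<Sum>i8\<in>B8. \<Sum>i9\<in>B9. f l i1 i2 i3 i4 i5 i6 i7 i8 i9) = (\<Sum>i1\<in>B1. \<Sum>i2\<in>B2. \<Sum>i3\<in>B3. \<Sum>i4\<in>B4. \<Sum>i5\<in>B5. \<Sum>i6\<in>B6. \<Sum>i7\<in>B7. \<Sum>i8\<in>B8. \<Sum>i9\<in>B9. \<Sum>l\<in>A. f l i1 i2 i3 i4 i5 i6 i7 i8 i9)"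
  by (subst sum.swap) (rule sum.cong[OF refl], rule mv8)
lemma mv10: "(\<Sum>l\<in>A. \<Sum>i1\<in>B1. \<Sum>i2\<in>B2. \<Sum>i3\<in>B3. \<Sum>i4\<in>B4. \<Sum>i5\<in>B5. \<Sum>i6\<in>B6. \<Sum>i7\<in>B7. \<Sum>i8\<in>B8. \<Sum>i9\<in>B9. \<Sum>i10\<in>B10. f l i1 i2 i3 i4 i5 i6 i7 i8 i9 i10) = (\<Sum>i1\<in>B1. \<Sum>i2\<in>B2. \<Sum>i3\<in>B3. \<Sum>i4\<in>B4. \<Sum>i5\<in>B5. \<Sum>i6\<in>B6. \<Sum>i7\<in>B7. \<Sum>i8\<in>B8. \<Sum>i9\<in>B9. \<Sum>i10\<in>B10. \<Sum>l\<in>A. f l i1 i2 i3 i4 i5 i6 i7 i8 i9 i10)"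
  by (subst sum.swap) (rule sum.cong[OF refl], rule mv9)

context hopf begin

lemma F4: "(\<Sum>p\<in>UNIV. s a p * e p) = e a"
proof -
  have "(\<Sum>l\<in>UNIV. (\<Sum>i\<in>UNIV. \<Sum>j\<in>UNIV. c a i j * (\<Sum>p\<in>UNIV. s j p * m i p l)) * e l) = (\<Sum>l\<in>UNIV. e a * u l * e l)"
    by (simp add: antiR)
  also have "\<dots> = e a" by (simp add: e1 mult.assoc flip: sum_distrib_left)
  finally have 1: "(\<Sum>l\<in>UNIV. (\<Sum>i\<in>UNIV. \<Sum>j\<in>UNIV. c a i j * (\<Sum>p\<in>UNIV. s j p * m i p l)) * e l) = e a" .
  have "(\<Sum>l\<in>UNIV. (\<Sum>i\<in>UNIV. \<Sum>j\<in>UNIV. c a i j * (\<Sum>p\<in>UNIV. s j p * m i p l)) * e l)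
    = (\<Sum>l\<in>UNIV. \<Sum>i\<in>UNIV. \<Sum>j\<in>UNIV. \<Sum>p\<in>UNIV. c a i j * s j p * (m i p l * e l))"
    by (simp add: sum_distrib_left sum_distrib_right mult_ac)
  also have "\<dots> = (\<Sum>i\<in>UNIV. \<Sum>j\<in>UNIV. \<Sum>p\<in>UNIV. \<Sum>l\<in>UNIV. c a i j * s j p * (m i p l * e l))"
    by (rule mv3)
  also have "\<dots> = (\<Sum>i\<in>UNIV. \<Sum>j\<in>UNIV. \<Sum>p\<in>UNIV. c a i j * s j p * (e i * e p))"
    by (simp add: emul flip: sum_distrib_left)
  also have "\<dots> = (\<Sum>j\<in>UNIV. \<Sum>i\<in>UNIV. (e i * c a i j) * (\<Sum>p\<in>UNIV. s j p * e p))"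
    by (subst sum.swap) (simp add: sum_distrib_left sum_distrib_right mult_ac)
  also have "\<dots> = (\<Sum>p\<in>UNIV. s a p * e p)" by (simp add: counitL flip: sum_distrib_right)
  finally show ?thesis using 1 by simp
qed

lemma F3: "(\<Sum>i\<in>UNIV. u i * s i l) = u l"
proof -
  have "(\<Sum>q\<in>UNIV. u q * (\<Sum>i\<in>UNIV. \<Sum>j\<in>UNIV. c q i j * (\<Sum>p\<in>UNIV. s i p * m p j l))) = (\<Sum>q\<in>UNIV. u q * e q) * u l"
    by (simp only: antiL) (simp add: sum_distrib_left sum_distrib_right mult_ac)
  also have "\<dots> = u l" by (simp add: e1)
  finally have 1: "(\<Sum>q\<in>UNIV. u q * (\<Sum>i\<in>UNIV. \<Sum>j\<in>UNIV. c q i j * (\<Sum>p\<in>UNIV. s i p * m p j l))) = u l" .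
  have "(\<Sum>q\<in>UNIV. u q * (\<Sum>i\<in>UNIV. \<Sum>j\<in>UNIV. c q i j * (\<Sum>p\<in>UNIV. s i p * m p j l)))
     = (\<Sum>q\<in>UNIV. \<Sum>i\<in>UNIV. \<Sum>j\<in>UNIV. u q * c q i j * (\<Sum>p\<in>UNIV. s i p * m p j l))"
    by (simp add: sum_distrib_left sum_distrib_right mult_ac)
  also have "\<dots> = (\<Sum>i\<in>UNIV. \<Sum>j\<in>UNIV. \<Sum>q\<in>UNIV. u q * c q i j * (\<Sum>p\<in>UNIV. s i p * m p j l))"
    by (rule mv2)
  also have "\<dots> = (\<Sum>i\<in>UNIV. \<Sum>j\<in>UNIV. (\<Sum>q\<in>UNIV. u q * c q i j) * (\<Sum>p\<in>UNIV. s i p * m p j l))"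
    by (simp add: sum_distrib_right)
  also have "\<dots> = (\<Sum>i\<in>UNIV. \<Sum>j\<in>UNIV. \<Sum>p\<in>UNIV. u i * s i p * (u j * m p j l))"
    by (simp add: c1 sum_distrib_left sum_distrib_right mult_ac)
  also have "\<dots> = (\<Sum>i\<in>UNIV. \<Sum>p\<in>UNIV. \<Sum>j\<in>UNIV. u i * s i p * (u j * m p j l))"
    by (rule sum.cong[OF refl], rule sum.swap)
  also have "\<dots> = (\<Sum>i\<in>UNIV. \<Sum>p\<in>UNIV. u i * s i p * (\<Sum>j\<in>UNIV. u j * m p j l))"
    by (simp add: sum_distrib_left)
  also have "\<dots> = (\<Sum>i\<in>UNIV. u i * s i l)"
    by (simp add: unitR)
  finally show ?thesis using 1 by simp
qed

definition TM :: "('i \<Rightarrow> 'i \<Rightarrow> 'k) \<Rightarrow> ('i \<Rightarrow> 'i \<Rightarrow> 'k) \<Rightarrow> 'i \<Rightarrow> 'i \<Rightarrow> 'k" where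
  "TM t t' x y = (\<Sum>x1\<in>UNIV. \<Sum>y1\<in>UNIV. \<Sum>x2\<in>UNIV. \<Sum>y2\<in>UNIV. t x1 y1 * t' x2 y2 * m x1 x2 x * m y1 y2 y)"

lemma TM_lin1: "TM (\<lambda>x y. \<Sum>k\<in>UNIV. w k * T k x y) t' x y = (\<Sum>k\<in>UNIV. w k * TM (T k) t' x y)"
proof -
  have "TM (\<lambda>x y. \<Sum>k\<in>UNIV. w k * T k x y) t' x y
     = (\<Sum>x1\<in>UNIV. \<Sum>y1\<in>UNIV. \<Sum>x2\<in>UNIV. \<Sum>y2\<in>UNIV. \<Sum>k\<in>UNIV. w k * T k x1 y1 * t' x2 y2 * m x1 x2 x * m y1 y2 y)"
    by (simp add: TM_def sum_distrib_left sum_distrib_right mult_ac)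
  also have "\<dots> = (\<Sum>k\<in>UNIV. \<Sum>x1\<in>UNIV. \<Sum>y1\<in>UNIV. \<Sum>x2\<in>UNIV. \<Sum>y2\<in>UNIV. w k * T k x1 y1 * t' x2 y2 * m x1 x2 x * m y1 y2 y)"
    by (rule mv4[symmetric])
  also have "\<dots> = (\<Sum>k\<in>UNIV. w k * TM (T k) t' x y)"
    by (simp add: TM_def sum_distrib_left sum_distrib_right mult_ac)
  finally show ?thesis .
qed

lemma TM_lin2: "TM t (\<lambda>x y. \<Sum>k\<in>UNIV. w k * T k x y) x y = (\<Sum>k\<in>UNIV. w k * TM t (T k) x y)"
proof -
  have "TM t (\<lambda>x y. \<Sum>k\<in>UNIV. w k * T k x y) x y
     = (\<Sum>x1\<in>UNIV. \<Sum>y1\<in>UNIV. \<Sum>x2\<in>UNIV. \<Sum>y2\<in>UNIV. \<Sum>k\<in>UNIV. w k * t x1 y1 * T k x2 y2 * m x1 x2 x * m y1 y2 y)"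
    by (simp add: TM_def sum_distrib_left sum_distrib_right mult_ac)
  also have "\<dots> = (\<Sum>k\<in>UNIV. \<Sum>x1\<in>UNIV. \<Sum>y1\<in>UNIV. \<Sum>x2\<in>UNIV. \<Sum>y2\<in>UNIV. w k * t x1 y1 * T k x2 y2 * m x1 x2 x * m y1 y2 y)"
    by (rule mv4[symmetric])
  also have "\<dots> = (\<Sum>k\<in>UNIV. w k * TM t (T k) x y)"
    by (simp add: TM_def sum_distrib_left sum_distrib_right mult_ac)
  finally show ?thesis .
qed

lemma TM_unitL: "TM (\<lambda>x y. u x * u y) t x y = t x y"
proof -
  have "TM (\<lambda>x y. u x * u y) t x y = (\<Sum>x1\<in>UNIV. \<Sum>y1\<in>UNIV. \<Sum>x2\<in>UNIV. \<Sum>y2\<in>UNIV. u x1 * u y1 * t x2 y2 * m x1 x2 x * m y1 y2 y)"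
    unfolding TM_def by simp
  also have "\<dots> = (\<Sum>y1\<in>UNIV. \<Sum>x2\<in>UNIV. \<Sum>y2\<in>UNIV. \<Sum>x1\<in>UNIV. u x1 * u y1 * t x2 y2 * m x1 x2 x * m y1 y2 y)"
    by (rule mv3)
  also have "\<dots> = (\<Sum>x2\<in>UNIV. \<Sum>y2\<in>UNIV. \<Sum>x1\<in>UNIV. \<Sum>y1\<in>UNIV. u x1 * u y1 * t x2 y2 * m x1 x2 x * m y1 y2 y)"
    by (rule mv3)
  also have "\<dots> = (\<Sum>x2\<in>UNIV. \<Sum>y2\<in>UNIV. t x2 y2 * (\<Sum>x1\<in>UNIV. u x1 * m x1 x2 x) * (\<Sum>y1\<in>UNIV. u y1 * m y1 y2 y))"
    by (simp add: sum_distrib_left sum_distrib_right mult_ac)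
  also have "\<dots> = t x y" by (simp add: unitL)
  finally show ?thesis .
qed

lemma TM_unitR: "TM t (\<lambda>x y. u x * u y) x y = t x y"
proof -
  have "TM t (\<lambda>x y. u x * u y) x y = (\<Sum>x1\<in>UNIV. \<Sum>y1\<in>UNIV. \<Sum>x2\<in>UNIV. \<Sum>y2\<in>UNIV. t x1 y1 * u x2 * u y2 * m x1 x2 x * m y1 y2 y)"
    unfolding TM_def by (simp add: mult_ac)
  also have "\<dots> = (\<Sum>x1\<in>UNIV. \<Sum>y1\<in>UNIV. t x1 y1 * (\<Sum>x2\<in>UNIV. u x2 * m x1 x2 x) * (\<Sum>y2\<in>UNIV. u y2 * m y1 y2 y))"
    by (simp add: sum_distrib_left sum_distrib_right mult_ac)
  also have "\<dots> = t x y" by (simp add: unitR)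
  finally show ?thesis .
qed

end

context hopf begin

lemma TM_assoc: "TM (TM t t') t'' x y = TM t (TM t' t'') x y"
proof -
  have "TM (TM t t') t'' x y = (\<Sum>p\<in>UNIV. \<Sum>q\<in>UNIV. \<Sum>r\<in>UNIV. \<Sum>w\<in>UNIV. \<Sum>x1\<in>UNIV. \<Sum>y1\<in>UNIV. \<Sum>x2\<in>UNIV. \<Sum>y2\<in>UNIV. t x1 y1 * t' x2 y2 * t'' r w * (m x1 x2 p * m p r x) * (m y1 y2 q * m q w y))"
    by (simp add: TM_def sum_distrib_left sum_distrib_right mult_ac)
  also have "\<dots> = (\<Sum>q\<in>UNIV. \<Sum>r\<in>UNIV. \<Sum>w\<in>UNIV. \<Sum>x1\<in>UNIV. \<Sum>y1\<in>UNIV. \<Sum>x2\<in>UNIV. \<Sum>y2\<in>UNIV. \<Sum>p\<in>UNIV. t x1 y1 * t' x2 y2 * t'' r w * (m x1 x2 p * m p r x) * (m y1 y2 q * m q w y))"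
    by (rule mv7)
  also have "\<dots> = (\<Sum>r\<in>UNIV. \<Sum>w\<in>UNIV. \<Sum>x1\<in>UNIV. \<Sum>y1\<in>UNIV. \<Sum>x2\<in>UNIV. \<Sum>y2\<in>UNIV. \<Sum>p\<in>UNIV. \<Sum>q\<in>UNIV. t x1 y1 * t' x2 y2 * t'' r w * (m x1 x2 p * m p r x) * (m y1 y2 q * m q w y))"
    by (rule mv7)
  also have "\<dots> = (\<Sum>w\<in>UNIV. \<Sum>x1\<in>UNIV. \<Sum>y1\<in>UNIV. \<Sum>x2\<in>UNIV. \<Sum>y2\<in>UNIV. \<Sum>r\<in>UNIV. \<Sum>p\<in>UNIV. \<Sum>q\<in>UNIV. t x1 y1 * t' x2 y2 * t'' r w * (m x1 x2 p * m p r x) * (m y1 y2 q * m q w y))"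
    by (rule mv5)
  also have "\<dots> = (\<Sum>x1\<in>UNIV. \<Sum>y1\<in>UNIV. \<Sum>x2\<in>UNIV. \<Sum>y2\<in>UNIV. \<Sum>r\<in>UNIV. \<Sum>w\<in>UNIV. \<Sum>p\<in>UNIV. \<Sum>q\<in>UNIV. t x1 y1 * t' x2 y2 * t'' r w * (m x1 x2 p * m p r x) * (m y1 y2 q * m q w y))"
    by (rule mv5)
  also have "\<dots> = (\<Sum>x1\<in>UNIV. \<Sum>y1\<in>UNIV. \<Sum>x2\<in>UNIV. \<Sum>y2\<in>UNIV. \<Sum>r\<in>UNIV. \<Sum>w\<in>UNIV. t x1 y1 * t' x2 y2 * t'' r w * (\<Sum>p\<in>UNIV. m x1 x2 p * m p r x) * (\<Sum>q\<in>UNIV. m y1 y2 q * m q w y))"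
    by (simp add: sum_distrib_left sum_distrib_right mult_ac)
  also have "\<dots> = (\<Sum>x1\<in>UNIV. \<Sum>y1\<in>UNIV. \<Sum>x2\<in>UNIV. \<Sum>y2\<in>UNIV. \<Sum>r\<in>UNIV. \<Sum>w\<in>UNIV. t x1 y1 * t' x2 y2 * t'' r w * (\<Sum>v\<in>UNIV. m x2 r v * m x1 v x) * (\<Sum>z\<in>UNIV. m y2 w z * m y1 z y))"
    by (simp only: assoc)
  finally have L: "TM (TM t t') t'' x y = (\<Sum>x1\<in>UNIV. \<Sum>y1\<in>UNIV. \<Sum>x2\<in>UNIV. \<Sum>y2\<in>UNIV. \<Sum>r\<in>UNIV. \<Sum>w\<in>UNIV. t x1 y1 * t' x2 y2 * t'' r w * (\<Sum>v\<in>UNIV. m x2 r v * m x1 v x) * (\<Sum>z\<in>UNIV. m y2 w z * m y1 z y))" .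
  have "TM t (TM t' t'') x y = (\<Sum>x1\<in>UNIV. \<Sum>y1\<in>UNIV. \<Sum>v\<in>UNIV. \<Sum>z\<in>UNIV. \<Sum>x2\<in>UNIV. \<Sum>y2\<in>UNIV. \<Sum>r\<in>UNIV. \<Sum>w\<in>UNIV. t x1 y1 * t' x2 y2 * t'' r w * (m x2 r v * m x1 v x) * (m y2 w z * m y1 z y))"
    by (simp add: TM_def sum_distrib_left sum_distrib_right mult_ac)
  also have "\<dots> = (\<Sum>x1\<in>UNIV. \<Sum>y1\<in>UNIV. \<Sum>z\<in>UNIV. \<Sum>x2\<in>UNIV. \<Sum>y2\<in>UNIV. \<Sum>r\<in>UNIV. \<Sum>w\<in>UNIV. \<Sum>v\<in>UNIV. t x1 y1 * t' x2 y2 * t'' r w * (m x2 r v * m x1 v x) * (m y2 w z * m y1 z y))"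
    by (rule sum.cong[OF refl], rule sum.cong[OF refl], rule mv5)
  also have "\<dots> = (\<Sum>x1\<in>UNIV. \<Sum>y1\<in>UNIV. \<Sum>x2\<in>UNIV. \<Sum>y2\<in>UNIV. \<Sum>r\<in>UNIV. \<Sum>w\<in>UNIV. \<Sum>v\<in>UNIV. \<Sum>z\<in>UNIV. t x1 y1 * t' x2 y2 * t'' r w * (m x2 r v * m x1 v x) * (m y2 w z * m y1 z y))"
    by (rule sum.cong[OF refl], rule sum.cong[OF refl], rule mv5)
  also have "\<dots> = (\<Sum>x1\<in>UNIV. \<Sum>y1\<in>UNIV. \<Sum>x2\<in>UNIV. \<Sum>y2\<in>UNIV. \<Sum>r\<in>UNIV. \<Sum>w\<in>UNIV. t x1 y1 * t' x2 y2 * t'' r w * (\<Sum>v\<in>UNIV. m x2 r v * m x1 v x) * (\<Sum>z\<in>UNIV. m y2 w z * m y1 z y))"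
    by (simp add: sum_distrib_left sum_distrib_right mult_ac)
  finally show ?thesis using L by simp
qed

lemma TM_lin1b: "TM (\<lambda>x y. \<Sum>k\<in>UNIV. \<Sum>l\<in>UNIV. w k l * T k l x y) t' x y = (\<Sum>k\<in>UNIV. \<Sum>l\<in>UNIV. w k l * TM (T k l) t' x y)"
proof -
  have "(\<Sum>k\<in>UNIV. \<Sum>l\<in>UNIV. w k l * TM (T k l) t' x y) = (\<Sum>k\<in>UNIV. \<Sum>l\<in>UNIV. \<Sum>x1\<in>UNIV. \<Sum>y1\<in>UNIV. \<Sum>x2\<in>UNIV. \<Sum>y2\<in>UNIV. w k l * T k l x1 y1 * t' x2 y2 * m x1 x2 x * m y1 y2 y)"
    by (simp add: TM_def sum_distrib_left sum_distrib_right mult_ac)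
  also have "\<dots> = (\<Sum>l\<in>UNIV. \<Sum>x1\<in>UNIV. \<Sum>y1\<in>UNIV. \<Sum>x2\<in>UNIV. \<Sum>y2\<in>UNIV. \<Sum>k\<in>UNIV. w k l * T k l x1 y1 * t' x2 y2 * m x1 x2 x * m y1 y2 y)"
    by (rule mv5)
  also have "\<dots> = (\<Sum>x1\<in>UNIV. \<Sum>y1\<in>UNIV. \<Sum>x2\<in>UNIV. \<Sum>y2\<in>UNIV. \<Sum>k\<in>UNIV. \<Sum>l\<in>UNIV. w k l * T k l x1 y1 * t' x2 y2 * m x1 x2 x * m y1 y2 y)"
    by (rule mv5)
  also have "\<dots> = TM (\<lambda>x y. \<Sum>k\<in>UNIV. \<Sum>l\<in>UNIV. w k l * T k l x y) t' x y"
    by (simp add: TM_def sum_distrib_left sum_distrib_right mult_ac)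
  finally show ?thesis by simp
qed

lemma TM_lin2b: "TM t (\<lambda>x y. \<Sum>k\<in>UNIV. \<Sum>l\<in>UNIV. w k l * T k l x y) x y = (\<Sum>k\<in>UNIV. \<Sum>l\<in>UNIV. w k l * TM t (T k l) x y)"
proof -
  have "(\<Sum>k\<in>UNIV. \<Sum>l\<in>UNIV. w k l * TM t (T k l) x y) = (\<Sum>k\<in>UNIV. \<Sum>l\<in>UNIV. \<Sum>x1\<in>UNIV. \<Sum>y1\<in>UNIV. \<Sum>x2\<in>UNIV. \<Sum>y2\<in>UNIV. w k l * t x1 y1 * T k l x2 y2 * m x1 x2 x * m y1 y2 y)"
    by (simp add: TM_def sum_distrib_left sum_distrib_right mult_ac)
  also have "\<dots> = (\<Sum>l\<in>UNIV. \<Sum>x1\<in>UNIV. \<Sum>y1\<in>UNIV. \<Sum>x2\<in>UNIV. \<Sum>y2\<in>UNIV. \<Sum>k\<in>UNIV. w k l * t x1 y1 * T k l x2 y2 * m x1 x2 x * m y1 y2 y)"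
    by (rule mv5)
  also have "\<dots> = (\<Sum>x1\<in>UNIV. \<Sum>y1\<in>UNIV. \<Sum>x2\<in>UNIV. \<Sum>y2\<in>UNIV. \<Sum>k\<in>UNIV. \<Sum>l\<in>UNIV. w k l * t x1 y1 * T k l x2 y2 * m x1 x2 x * m y1 y2 y)"
    by (rule mv5)
  also have "\<dots> = TM t (\<lambda>x y. \<Sum>k\<in>UNIV. \<Sum>l\<in>UNIV. w k l * T k l x y) x y"
    by (simp add: TM_def sum_distrib_left sum_distrib_right mult_ac)
  finally show ?thesis by simp
qed

lemma TM_scal2: "TM t (\<lambda>x y. w * T x y) x y = w * TM t T x y"
  by (simp add: TM_def sum_distrib_left mult_ac)
lemma TM_scal1: "TM (\<lambda>x y. w * T x y) t x y = w * TM T t x y"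
  by (simp add: TM_def sum_distrib_left mult_ac)

definition conv :: "('i \<Rightarrow> 'i \<Rightarrow> 'i \<Rightarrow> 'k) \<Rightarrow> ('i \<Rightarrow> 'i \<Rightarrow> 'i \<Rightarrow> 'k) \<Rightarrow> 'i \<Rightarrow> 'i \<Rightarrow> 'i \<Rightarrow> 'k" where
  "conv F G a x y = (\<Sum>i\<in>UNIV. \<Sum>j\<in>UNIV. c a i j * TM (F i) (G j) x y)"

definition EE :: "'i \<Rightarrow> 'i \<Rightarrow> 'i \<Rightarrow> 'k" where "EE a x y = e a * (u x * u y)"

lemma conv_E_right: "conv F EE a x y = F a x y"
proof -
  have "conv F EE a x y = (\<Sum>i\<in>UNIV. \<Sum>j\<in>UNIV. c a i j * (e j * F i x y))"
    unfolding conv_def EE_def by (simp add: TM_scal2 TM_unitR)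
  also have "\<dots> = (\<Sum>i\<in>UNIV. (\<Sum>j\<in>UNIV. c a i j * e j) * F i x y)"
    by (simp add: sum_distrib_left sum_distrib_right mult_ac)
  also have "\<dots> = F a x y" by (simp add: counitR)
  finally show ?thesis .
qed

lemma conv_E_left: "conv EE G a x y = G a x y"
proof -
  have "conv EE G a x y = (\<Sum>i\<in>UNIV. \<Sum>j\<in>UNIV. c a i j * (e i * G j x y))"
    unfolding conv_def EE_def by (simp add: TM_scal1 TM_unitL)
  also have "\<dots> = (\<Sum>j\<in>UNIV. \<Sum>i\<in>UNIV. c a i j * (e i * G j x y))"
    by (rule sum.swap)
  also have "\<dots> = (\<Sum>j\<in>UNIV. (\<Sum>i\<in>UNIV. e i * c a i j) * G j x y)"
    by (simp add: sum_distrib_left sum_distrib_right mult_ac)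
  also have "\<dots> = G a x y" by (simp add: counitL)
  finally show ?thesis .
qed

lemma conv_assoc: "conv (conv F G) K a x y = conv F (conv G K) a x y"
proof -
  have "conv (conv F G) K a x y = (\<Sum>i\<in>UNIV. \<Sum>j\<in>UNIV. c a i j * (\<Sum>k\<in>UNIV. \<Sum>l\<in>UNIV. c i k l * TM (TM (F k) (G l)) (K j) x y))"
    unfolding conv_def by (simp add: TM_lin1b)
  also have "\<dots> = (\<Sum>i\<in>UNIV. \<Sum>j\<in>UNIV. \<Sum>k\<in>UNIV. \<Sum>l\<in>UNIV. c a i j * c i k l * TM (F k) (TM (G l) (K j)) x y)"
    by (simp add: TM_assoc sum_distrib_left mult_ac)
  also have "\<dots> = (\<Sum>j\<in>UNIV. \<Sum>k\<in>UNIV. \<Sum>l\<in>UNIV. \<Sum>i\<in>UNIV. c a i j * c i k l * TM (F k) (TM (G l) (K j)) x y)"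
    by (rule mv3)
  also have "\<dots> = (\<Sum>k\<in>UNIV. \<Sum>l\<in>UNIV. \<Sum>j\<in>UNIV. \<Sum>i\<in>UNIV. c a i j * c i k l * TM (F k) (TM (G l) (K j)) x y)"
    by (rule mv2)
  also have "\<dots> = (\<Sum>k\<in>UNIV. \<Sum>l\<in>UNIV. \<Sum>j\<in>UNIV. (\<Sum>i\<in>UNIV. c a i j * c i k l) * TM (F k) (TM (G l) (K j)) x y)"
    by (simp add: sum_distrib_right)
  also have "\<dots> = (\<Sum>k\<in>UNIV. \<Sum>l\<in>UNIV. \<Sum>j\<in>UNIV. (\<Sum>i\<in>UNIV. c a k i * c i l j) * TM (F k) (TM (G l) (K j)) x y)"
    by (simp only: coassoc)
  finally have L: "conv (conv F G) K a x y = (\<Sum>k\<in>UNIV. \<Sum>l\<in>UNIV. \<Sum>j\<in>UNIV. (\<Sum>i\<in>UNIV. c a k i * c i l j) * TM (F k) (TM (G l) (K j)) x y)" .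
  have "conv F (conv G K) a x y = (\<Sum>k\<in>UNIV. \<Sum>i\<in>UNIV. c a k i * (\<Sum>l\<in>UNIV. \<Sum>j\<in>UNIV. c i l j * TM (F k) (TM (G l) (K j)) x y))"
    unfolding conv_def by (simp add: TM_lin2b)
  also have "\<dots> = (\<Sum>k\<in>UNIV. \<Sum>i\<in>UNIV. \<Sum>l\<in>UNIV. \<Sum>j\<in>UNIV. c a k i * c i l j * TM (F k) (TM (G l) (K j)) x y)"
    by (simp add: sum_distrib_left mult_ac)
  also have "\<dots> = (\<Sum>k\<in>UNIV. \<Sum>l\<in>UNIV. \<Sum>j\<in>UNIV. \<Sum>i\<in>UNIV. c a k i * c i l j * TM (F k) (TM (G l) (K j)) x y)"
    by (rule sum.cong[OF refl], rule mv2)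
  also have "\<dots> = (\<Sum>k\<in>UNIV. \<Sum>l\<in>UNIV. \<Sum>j\<in>UNIV. (\<Sum>i\<in>UNIV. c a k i * c i l j) * TM (F k) (TM (G l) (K j)) x y)"
    by (simp add: sum_distrib_right)
  finally show ?thesis using L by simp
qed

end

context hopf begin

definition SS :: "'i \<Rightarrow> 'i \<Rightarrow> 'i \<Rightarrow> 'k" where "SS a x y = (\<Sum>p\<in>UNIV. s a p * c p x y)"
definition BB :: "'i \<Rightarrow> 'i \<Rightarrow> 'i \<Rightarrow> 'k" where "BB a x y = (\<Sum>i\<in>UNIV. \<Sum>j\<in>UNIV. c a i j * s j x * s i y)"

lemma coass4: "(\<Sum>i\<in>UNIV. \<Sum>j\<in>UNIV. c a i j * c i p q * c j r t) = (\<Sum>i\<in>UNIV. \<Sum>j\<in>UNIV. c a p i * c i j t * c j q r)"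
proof -
  have "(\<Sum>i\<in>UNIV. \<Sum>j\<in>UNIV. c a i j * c i p q * c j r t) = (\<Sum>j\<in>UNIV. \<Sum>i\<in>UNIV. c a i j * c i p q * c j r t)"
    by (rule sum.swap)
  also have "\<dots> = (\<Sum>j\<in>UNIV. (\<Sum>i\<in>UNIV. c a i j * c i p q) * c j r t)"
    by (simp add: sum_distrib_right)
  also have "\<dots> = (\<Sum>j\<in>UNIV. (\<Sum>i\<in>UNIV. c a p i * c i q j) * c j r t)"
    by (simp only: coassoc)
  also have "\<dots> = (\<Sum>j\<in>UNIV. \<Sum>i\<in>UNIV. c a p i * c i q j * c j r t)"
    by (simp add: sum_distrib_right)
  also have "\<dots> = (\<Sum>i\<in>UNIV. \<Sum>j\<in>UNIV. c a p i * c i q j * c j r t)"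
    by (rule sum.swap)
  also have "\<dots> = (\<Sum>i\<in>UNIV. c a p i * (\<Sum>j\<in>UNIV. c i q j * c j r t))"
    by (simp add: sum_distrib_left mult_ac)
  also have "\<dots> = (\<Sum>i\<in>UNIV. c a p i * (\<Sum>j\<in>UNIV. c i j t * c j q r))"
    by (simp only: coassoc)
  also have "\<dots> = (\<Sum>i\<in>UNIV. \<Sum>j\<in>UNIV. c a p i * c i j t * c j q r)"
    by (simp add: sum_distrib_left mult_ac)
  finally show ?thesis .
qed

lemma S1: "conv c BB a x y = EE a x y"
proof -
  define P where "P = (\<lambda>x1 l. \<Sum>x2\<in>UNIV. s l x2 * m x1 x2 x)"
  define Q where "Q = (\<lambda>y1 k. \<Sum>y2\<in>UNIV. s k y2 * m y1 y2 y)"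
  have "conv c BB a x y = (\<Sum>i\<in>UNIV. \<Sum>j\<in>UNIV. \<Sum>x1\<in>UNIV. \<Sum>y1\<in>UNIV. \<Sum>x2\<in>UNIV. \<Sum>y2\<in>UNIV. \<Sum>k\<in>UNIV. \<Sum>l\<in>UNIV. c a i j * c i x1 y1 * c j k l * s l x2 * s k y2 * m x1 x2 x * m y1 y2 y)"
    by (simp add: conv_def TM_def BB_def sum_distrib_left sum_distrib_right mult_ac)
  also have "\<dots> = (\<Sum>i\<in>UNIV. \<Sum>j\<in>UNIV. \<Sum>x1\<in>UNIV. \<Sum>y1\<in>UNIV. \<Sum>y2\<in>UNIV. \<Sum>k\<in>UNIV. \<Sum>l\<in>UNIV. \<Sum>x2\<in>UNIV. c a i j * c i x1 y1 * c j k l * s l x2 * s k y2 * m x1 x2 x * m y1 y2 y)"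
    by (intro sum.cong refl mv3)
  also have "\<dots> = (\<Sum>i\<in>UNIV. \<Sum>j\<in>UNIV. \<Sum>x1\<in>UNIV. \<Sum>y1\<in>UNIV. \<Sum>k\<in>UNIV. \<Sum>l\<in>UNIV. \<Sum>x2\<in>UNIV. \<Sum>y2\<in>UNIV. c a i j * c i x1 y1 * c j k l * s l x2 * s k y2 * m x1 x2 x * m y1 y2 y)"
    by (intro sum.cong refl mv3)
  also have "\<dots> = (\<Sum>i\<in>UNIV. \<Sum>j\<in>UNIV. \<Sum>x1\<in>UNIV. \<Sum>y1\<in>UNIV. \<Sum>k\<in>UNIV. \<Sum>l\<in>UNIV. c a i j * c i x1 y1 * c j k l * (P x1 l * Q y1 k))"
    by (simp add: P_def Q_def sum_distrib_left sum_distrib_right mult_ac)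
  also have "\<dots> = (\<Sum>j\<in>UNIV. \<Sum>x1\<in>UNIV. \<Sum>y1\<in>UNIV. \<Sum>k\<in>UNIV. \<Sum>l\<in>UNIV. \<Sum>i\<in>UNIV. c a i j * c i x1 y1 * c j k l * (P x1 l * Q y1 k))"
    by (rule mv5)
  also have "\<dots> = (\<Sum>x1\<in>UNIV. \<Sum>y1\<in>UNIV. \<Sum>k\<in>UNIV. \<Sum>l\<in>UNIV. \<Sum>i\<in>UNIV. \<Sum>j\<in>UNIV. c a i j * c i x1 y1 * c j k l * (P x1 l * Q y1 k))"
    by (rule mv5)
  also have "\<dots> = (\<Sum>x1\<in>UNIV. \<Sum>y1\<in>UNIV. \<Sum>k\<in>UNIV. \<Sum>l\<in>UNIV. (\<Sum>i\<in>UNIV. \<Sum>j\<in>UNIV. c a i j * c i x1 y1 * c j k l) * (P x1 l * Q y1 k))"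
    by (simp only: sum_distrib_right)
  also have "\<dots> = (\<Sum>x1\<in>UNIV. \<Sum>y1\<in>UNIV. \<Sum>k\<in>UNIV. \<Sum>l\<in>UNIV. (\<Sum>i\<in>UNIV. \<Sum>j\<in>UNIV. c a x1 i * c i j l * c j y1 k) * (P x1 l * Q y1 k))"
    by (simp only: coass4)
  also have "\<dots> = (\<Sum>x1\<in>UNIV. \<Sum>y1\<in>UNIV. \<Sum>k\<in>UNIV. \<Sum>l\<in>UNIV. \<Sum>i\<in>UNIV. \<Sum>j\<in>UNIV. c a x1 i * c i j l * (c j y1 k * Q y1 k) * P x1 l)"
    by (simp add: sum_distrib_left sum_distrib_right mult_ac)
  also have "\<dots> = (\<Sum>x1\<in>UNIV. \<Sum>k\<in>UNIV. \<Sum>l\<in>UNIV. \<Sum>i\<in>UNIV. \<Sum>j\<in>UNIV. \<Sum>y1\<in>UNIV. c a x1 i * c i j l * (c j y1 k * Q y1 k) * P x1 l)"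
    by (rule sum.cong[OF refl], rule mv4)
  also have "\<dots> = (\<Sum>x1\<in>UNIV. \<Sum>l\<in>UNIV. \<Sum>i\<in>UNIV. \<Sum>j\<in>UNIV. \<Sum>y1\<in>UNIV. \<Sum>k\<in>UNIV. c a x1 i * c i j l * (c j y1 k * Q y1 k) * P x1 l)"
    by (rule sum.cong[OF refl], rule mv4)
  also have "\<dots> = (\<Sum>x1\<in>UNIV. \<Sum>l\<in>UNIV. (\<Sum>i\<in>UNIV. c a x1 i * (\<Sum>j\<in>UNIV. c i j l * (\<Sum>y1\<in>UNIV. \<Sum>k\<in>UNIV. c j y1 k * Q y1 k))) * P x1 l)"
    by (simp add: sum_distrib_left sum_distrib_right mult_ac)
  also have "\<dots> = (\<Sum>x1\<in>UNIV. \<Sum>l\<in>UNIV. (\<Sum>i\<in>UNIV. c a x1 i * (\<Sum>j\<in>UNIV. c i j l * (e j * u y))) * P x1 l)"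
    unfolding Q_def by (simp only: antiR)
  also have "\<dots> = (\<Sum>x1\<in>UNIV. \<Sum>l\<in>UNIV. (\<Sum>i\<in>UNIV. c a x1 i * ((\<Sum>j\<in>UNIV. e j * c i j l) * u y)) * P x1 l)"
    by (simp add: sum_distrib_left sum_distrib_right mult_ac)
  also have "\<dots> = (\<Sum>x1\<in>UNIV. \<Sum>l\<in>UNIV. (c a x1 l * u y) * P x1 l)"
    by (simp add: counitL)
  also have "\<dots> = (\<Sum>x1\<in>UNIV. \<Sum>l\<in>UNIV. c a x1 l * (\<Sum>x2\<in>UNIV. s l x2 * m x1 x2 x)) * u y"
    by (simp add: P_def sum_distrib_left sum_distrib_right mult_ac)
  also have "\<dots> = EE a x y"
    by (simp add: antiR EE_def mult_ac)
  finally show ?thesis .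
qed

lemma TM_cc: "TM (c p) (c j) x y = (\<Sum>l\<in>UNIV. m p j l * c l x y)"
  by (simp add: TM_def cmul)

lemma S2: "conv SS c a x y = EE a x y"
proof -
  have "conv SS c a x y = (\<Sum>i\<in>UNIV. \<Sum>j\<in>UNIV. c a i j * (\<Sum>p\<in>UNIV. s i p * TM (c p) (c j) x y))"
    unfolding conv_def SS_def by (simp add: TM_lin1)
  also have "\<dots> = (\<Sum>i\<in>UNIV. \<Sum>j\<in>UNIV. \<Sum>p\<in>UNIV. \<Sum>l\<in>UNIV. c a i j * s i p * m p j l * c l x y)"
    by (simp add: TM_cc sum_distrib_left mult_ac)
  also have "\<dots> = (\<Sum>l\<in>UNIV. \<Sum>i\<in>UNIV. \<Sum>j\<in>UNIV. \<Sum>p\<in>UNIV. c a i j * s i p * m p j l * c l x y)"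
    by (rule mv3[symmetric])
  also have "\<dots> = (\<Sum>l\<in>UNIV. (\<Sum>i\<in>UNIV. \<Sum>j\<in>UNIV. c a i j * (\<Sum>p\<in>UNIV. s i p * m p j l)) * c l x y)"
    by (simp add: sum_distrib_left sum_distrib_right mult_ac)
  also have "\<dots> = (\<Sum>l\<in>UNIV. e a * (u l * c l x y))"
    by (simp add: antiL mult_ac)
  also have "\<dots> = EE a x y"
    by (simp add: EE_def c1 flip: sum_distrib_left)
  finally show ?thesis .
qed

lemma F2_fun: "SS = BB"
proof -
  have "SS a x y = BB a x y" for a x y
  proof -
    have "SS a x y = conv SS EE a x y" by (simp add: conv_E_right)
    also have "\<dots> = conv SS (conv c BB) a x y"
      by (simp add: S1[abs_def] flip: EE_def[abs_def])
    also have "\<dots> = conv (conv SS c) BB a x y" by (simp add: conv_assoc)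
    also have "\<dots> = conv EE BB a x y"
      by (simp add: S2[abs_def] flip: EE_def[abs_def])
    also have "\<dots> = BB a x y" by (simp add: conv_E_left)
    finally show ?thesis .
  qed
  then show ?thesis by (intro ext)
qed

lemma F2: "(\<Sum>p\<in>UNIV. s a p * c p x y) = (\<Sum>i\<in>UNIV. \<Sum>j\<in>UNIV. c a i j * s j x * s i y)"
  using F2_fun unfolding SS_def BB_def by metis

end

lemma sum_mul2:
  fixes f g :: "_ \<Rightarrow> 'a::comm_ring_1"
  shows "(\<Sum>j\<in>A. \<Sum>w\<in>B. f j * k * g w) = (\<Sum>j\<in>A. f j) * k * (\<Sum>w\<in>B. g w)"
proof -
  have "sum f A * k * sum g B = (\<Sum>j\<in>A. f j * k) * sum g B" by (simp only: sum_distrib_right)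
  also have "\<dots> = (\<Sum>j\<in>A. \<Sum>w\<in>B. f j * k * g w)" by (rule sum_product)
  finally show ?thesis by simp
qed

context hopf begin

definition G :: "('i \<Rightarrow> 'k) \<Rightarrow> 'i \<Rightarrow> 'i \<Rightarrow> 'k" where
  "G lam a b = (\<Sum>t\<in>UNIV. s a t * (\<Sum>n\<in>UNIV. m t b n * lam n))"

definition RI :: "('i \<Rightarrow> 'k) \<Rightarrow> bool" where
  "RI lam \<longleftrightarrow> (\<forall>q l. (\<Sum>i\<in>UNIV. lam i * c q i l) = lam q * u l)"

lemma K: "(\<Sum>i\<in>UNIV. \<Sum>j\<in>UNIV. c a i j * (\<Sum>x\<in>UNIV. \<Sum>y\<in>UNIV. \<Sum>p\<in>UNIV. s j x * (s i y * s y p) * m x p n)) = e a * u n"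
proof -
  have "(\<Sum>q\<in>UNIV. s a q * (\<Sum>x\<in>UNIV. \<Sum>y\<in>UNIV. c q x y * (\<Sum>p\<in>UNIV. s y p * m x p n))) = (\<Sum>q\<in>UNIV. s a q * e q) * u n"
    by (simp only: antiR) (simp add: sum_distrib_left sum_distrib_right mult_ac)
  also have "\<dots> = e a * u n" by (simp add: F4)
  finally have 1: "(\<Sum>q\<in>UNIV. s a q * (\<Sum>x\<in>UNIV. \<Sum>y\<in>UNIV. c q x y * (\<Sum>p\<in>UNIV. s y p * m x p n))) = e a * u n" .
  have "(\<Sum>q\<in>UNIV. s a q * (\<Sum>x\<in>UNIV. \<Sum>y\<in>UNIV. c q x y * (\<Sum>p\<in>UNIV. s y p * m x p n))) = (\<Sum>q\<in>UNIV. \<Sum>x\<in>UNIV. \<Sum>y\<in>UNIV. \<Sum>p\<in>UNIV. s a q * c q x y * (s y p * m x p n))"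
    by (simp add: sum_distrib_left mult_ac)
  also have "\<dots> = (\<Sum>x\<in>UNIV. \<Sum>y\<in>UNIV. \<Sum>q\<in>UNIV. \<Sum>p\<in>UNIV. s a q * c q x y * (s y p * m x p n))"
    by (rule mv2)
  also have "\<dots> = (\<Sum>x\<in>UNIV. \<Sum>y\<in>UNIV. (\<Sum>q\<in>UNIV. s a q * c q x y) * (\<Sum>p\<in>UNIV. s y p * m x p n))"
    by (simp only: sum_product)
  also have "\<dots> = (\<Sum>x\<in>UNIV. \<Sum>y\<in>UNIV. (\<Sum>i\<in>UNIV. \<Sum>j\<in>UNIV. c a i j * s j x * s i y) * (\<Sum>p\<in>UNIV. s y p * m x p n))"
    by (simp only: F2)
  also have "\<dots> = (\<Sum>x\<in>UNIV. \<Sum>y\<in>UNIV. \<Sum>i\<in>UNIV. \<Sum>j\<in>UNIV. \<Sum>p\<in>UNIV. c a i j * (s j x * (s i y * s y p) * m x p n))"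
    by (simp add: sum_distrib_left sum_distrib_right mult_ac)

  also have "\<dots> = (\<Sum>i\<in>UNIV. \<Sum>x\<in>UNIV. \<Sum>y\<in>UNIV. \<Sum>j\<in>UNIV. \<Sum>p\<in>UNIV. c a i j * (s j x * (s i y * s y p) * m x p n))"
    by (rule mv2[symmetric])
  also have "\<dots> = (\<Sum>i\<in>UNIV. \<Sum>j\<in>UNIV. \<Sum>x\<in>UNIV. \<Sum>y\<in>UNIV. \<Sum>p\<in>UNIV. c a i j * (s j x * (s i y * s y p) * m x p n))"
    by (rule sum.cong[OF refl], rule mv2[symmetric])
  also have "\<dots> = (\<Sum>i\<in>UNIV. \<Sum>j\<in>UNIV. c a i j * (\<Sum>x\<in>UNIV. \<Sum>y\<in>UNIV. \<Sum>p\<in>UNIV. s j x * (s i y * s y p) * m x p n))"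
    by (simp only: sum_distrib_left)
  finally show ?thesis using 1 by simp
qed

lemma Gu:
  assumes "RI lam"
  shows "G lam j b * u w = (\<Sum>i\<in>UNIV. lam i * (\<Sum>p\<in>UNIV. \<Sum>q\<in>UNIV. \<Sum>r\<in>UNIV. \<Sum>v\<in>UNIV. BB j p q * c b r v * m p r i * m q v w))"
proof -
  have ri: "lam n * u w = (\<Sum>i\<in>UNIV. lam i * c n i w)" for n using assms by (simp add: RI_def)
  have "G lam j b * u w = (\<Sum>t\<in>UNIV. \<Sum>n\<in>UNIV. s j t * m t b n * (lam n * u w))"
    by (simp add: G_def sum_distrib_left sum_distrib_right mult_ac)
  also have "\<dots> = (\<Sum>t\<in>UNIV. \<Sum>n\<in>UNIV. s j t * m t b n * (\<Sum>i\<in>UNIV. lam i * c n i w))"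
    by (simp only: ri)
  also have "\<dots> = (\<Sum>t\<in>UNIV. \<Sum>n\<in>UNIV. \<Sum>i\<in>UNIV. s j t * m t b n * (lam i * c n i w))"
    by (simp only: sum_distrib_left)

  also have "\<dots> = (\<Sum>i\<in>UNIV. \<Sum>t\<in>UNIV. \<Sum>n\<in>UNIV. s j t * m t b n * (lam i * c n i w))"
    by (rule mv2[symmetric])
  also have "\<dots> = (\<Sum>i\<in>UNIV. \<Sum>t\<in>UNIV. lam i * s j t * (\<Sum>n\<in>UNIV. m t b n * c n i w))"
    by (simp add: sum_distrib_left mult_ac)
  also have "\<dots> = (\<Sum>i\<in>UNIV. \<Sum>t\<in>UNIV. lam i * s j t * (\<Sum>p\<in>UNIV. \<Sum>q\<in>UNIV. \<Sum>r\<in>UNIV. \<Sum>v\<in>UNIV. c t p q * c b r v * m p r i * m q v w))"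
    by (simp only: cmul)
  also have "\<dots> = (\<Sum>i\<in>UNIV. \<Sum>t\<in>UNIV. \<Sum>p\<in>UNIV. \<Sum>q\<in>UNIV. \<Sum>r\<in>UNIV. \<Sum>v\<in>UNIV. lam i * s j t * c t p q * (c b r v * m p r i * m q v w))"
    by (simp add: sum_distrib_left mult_ac)

  also have "\<dots> = (\<Sum>i\<in>UNIV. \<Sum>p\<in>UNIV. \<Sum>t\<in>UNIV. \<Sum>q\<in>UNIV. \<Sum>r\<in>UNIV. \<Sum>v\<in>UNIV. lam i * s j t * c t p q * (c b r v * m p r i * m q v w))"
    by (rule sum.cong[OF refl], rule mv1[symmetric])
  also have "\<dots> = (\<Sum>i\<in>UNIV. \<Sum>p\<in>UNIV. \<Sum>q\<in>UNIV. \<Sum>t\<in>UNIV. \<Sum>r\<in>UNIV. \<Sum>v\<in>UNIV. lam i * s j t * c t p q * (c b r v * m p r i * m q v w))"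
    by (rule sum.cong[OF refl], rule sum.cong[OF refl], rule mv1[symmetric])
  also have "\<dots> = (\<Sum>i\<in>UNIV. \<Sum>p\<in>UNIV. \<Sum>q\<in>UNIV. \<Sum>r\<in>UNIV. \<Sum>t\<in>UNIV. \<Sum>v\<in>UNIV. lam i * s j t * c t p q * (c b r v * m p r i * m q v w))"
    by (rule sum.cong[OF refl], rule sum.cong[OF refl], rule sum.cong[OF refl], rule mv1[symmetric])
  also have "\<dots> = (\<Sum>i\<in>UNIV. \<Sum>p\<in>UNIV. \<Sum>q\<in>UNIV. \<Sum>r\<in>UNIV. \<Sum>v\<in>UNIV. \<Sum>t\<in>UNIV. lam i * s j t * c t p q * (c b r v * m p r i * m q v w))"
    by (rule sum.cong[OF refl], rule sum.cong[OF refl], rule sum.cong[OF refl], rule sum.cong[OF refl], rule mv1[symmetric])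
  also have "\<dots> = (\<Sum>i\<in>UNIV. \<Sum>p\<in>UNIV. \<Sum>q\<in>UNIV. \<Sum>r\<in>UNIV. \<Sum>v\<in>UNIV. lam i * (\<Sum>t\<in>UNIV. s j t * c t p q) * (c b r v * m p r i * m q v w))"
    by (simp add: sum_distrib_left sum_distrib_right mult_ac)
  also have "\<dots> = (\<Sum>i\<in>UNIV. \<Sum>p\<in>UNIV. \<Sum>q\<in>UNIV. \<Sum>r\<in>UNIV. \<Sum>v\<in>UNIV. lam i * BB j p q * (c b r v * m p r i * m q v w))"
    by (simp only: F2 BB_def[symmetric])
  also have "\<dots> = (\<Sum>i\<in>UNIV. lam i * (\<Sum>p\<in>UNIV. \<Sum>q\<in>UNIV. \<Sum>r\<in>UNIV. \<Sum>v\<in>UNIV. BB j p q * c b r v * m p r i * m q v w))"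
    by (simp add: sum_distrib_left mult_ac)
  finally show ?thesis .
qed

lemma Zlem: "(\<Sum>j\<in>UNIV. \<Sum>l2\<in>UNIV. \<Sum>g\<in>UNIV. \<Sum>q\<in>UNIV. \<Sum>w\<in>UNIV. (c a l2 j * c j g h) * s g q * (m q v w * m l2 w l)) = (if a = h then 1 else 0) * (if v = l then 1 else 0)"
proof -

  have "(\<Sum>j\<in>UNIV. \<Sum>l2\<in>UNIV. \<Sum>g\<in>UNIV. \<Sum>q\<in>UNIV. \<Sum>w\<in>UNIV. (c a l2 j * c j g h) * s g q * (m q v w * m l2 w l)) = (\<Sum>l2\<in>UNIV. \<Sum>j\<in>UNIV. \<Sum>g\<in>UNIV. \<Sum>q\<in>UNIV. \<Sum>w\<in>UNIV. (c a l2 j * c j g h) * s g q * (m q v w * m l2 w l))"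
    by (rule mv1[symmetric])
  also have "\<dots> = (\<Sum>l2\<in>UNIV. \<Sum>g\<in>UNIV. \<Sum>j\<in>UNIV. \<Sum>q\<in>UNIV. \<Sum>w\<in>UNIV. (c a l2 j * c j g h) * s g q * (m q v w * m l2 w l))"
    by (rule sum.cong[OF refl], rule mv1[symmetric])
  also have "\<dots> = (\<Sum>l2\<in>UNIV. \<Sum>g\<in>UNIV. \<Sum>q\<in>UNIV. \<Sum>j\<in>UNIV. \<Sum>w\<in>UNIV. (c a l2 j * c j g h) * s g q * (m q v w * m l2 w l))"
    by (rule sum.cong[OF refl], rule sum.cong[OF refl], rule mv1[symmetric])
  also have "\<dots> = (\<Sum>l2\<in>UNIV. \<Sum>g\<in>UNIV. \<Sum>q\<in>UNIV. (\<Sum>j\<in>UNIV. c a l2 j * c j g h) * s g q * (\<Sum>w\<in>UNIV. m q v w * m l2 w l))"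
    by (simp only: sum_mul2)
  also have "\<dots> = (\<Sum>l2\<in>UNIV. \<Sum>g\<in>UNIV. \<Sum>q\<in>UNIV. (\<Sum>j\<in>UNIV. c a j h * c j l2 g) * s g q * (\<Sum>w\<in>UNIV. m l2 q w * m w v l))"
    by (simp only: coassoc[symmetric] assoc[symmetric])
  also have "\<dots> = (\<Sum>l2\<in>UNIV. \<Sum>g\<in>UNIV. \<Sum>q\<in>UNIV. \<Sum>j\<in>UNIV. \<Sum>w\<in>UNIV. (c a j h * c j l2 g) * s g q * (m l2 q w * m w v l))"
    by (simp only: sum_mul2)

  also have "\<dots> = (\<Sum>j\<in>UNIV. \<Sum>l2\<in>UNIV. \<Sum>g\<in>UNIV. \<Sum>q\<in>UNIV. \<Sum>w\<in>UNIV. (c a j h * c j l2 g) * s g q * (m l2 q w * m w v l))"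
    by (rule mv3[symmetric])
  also have "\<dots> = (\<Sum>j\<in>UNIV. \<Sum>w\<in>UNIV. \<Sum>l2\<in>UNIV. \<Sum>g\<in>UNIV. \<Sum>q\<in>UNIV. (c a j h * c j l2 g) * s g q * (m l2 q w * m w v l))"
    by (rule sum.cong[OF refl], rule mv3[symmetric])
  also have "\<dots> = (\<Sum>j\<in>UNIV. \<Sum>w\<in>UNIV. (c a j h * m w v l) * (\<Sum>l2\<in>UNIV. \<Sum>g\<in>UNIV. c j l2 g * (\<Sum>q\<in>UNIV. s g q * m l2 q w)))"
    by (simp add: sum_distrib_left mult_ac)
  also have "\<dots> = (\<Sum>j\<in>UNIV. \<Sum>w\<in>UNIV. (c a j h * m w v l) * (e j * u w))"
    by (simp only: antiR)
  also have "\<dots> = (\<Sum>j\<in>UNIV. e j * c a j h) * (\<Sum>w\<in>UNIV. u w * m w v l)"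
    by (simp only: sum_product) (simp add: mult_ac)
  also have "\<dots> = (if a = h then 1 else 0) * (if v = l then 1 else 0)"
    by (simp add: counitL unitL)
  finally show ?thesis .
qed

lemma coact:
  assumes "RI lam"
  shows "(\<Sum>j\<in>UNIV. c b j l * G lam a j) = (\<Sum>j\<in>UNIV. c a l j * G lam j b)"
proof -
  have "(\<Sum>j\<in>UNIV. c a l j * G lam j b) = (\<Sum>j\<in>UNIV. (\<Sum>l2\<in>UNIV. c a l2 j * (\<Sum>w\<in>UNIV. u w * m l2 w l)) * G lam j b)"
    by (simp add: unitR)
  also have "\<dots> = (\<Sum>j\<in>UNIV. \<Sum>l2\<in>UNIV. \<Sum>w\<in>UNIV. c a l2 j * m l2 w l * (G lam j b * u w))"
    by (simp add: sum_distrib_left sum_distrib_right mult_ac)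
  also have "\<dots> = (\<Sum>j\<in>UNIV. \<Sum>l2\<in>UNIV. \<Sum>w\<in>UNIV. c a l2 j * m l2 w l * (\<Sum>i\<in>UNIV. lam i * (\<Sum>p\<in>UNIV. \<Sum>q\<in>UNIV. \<Sum>r\<in>UNIV. \<Sum>v\<in>UNIV. BB j p q * c b r v * m p r i * m q v w)))"
    by (simp only: Gu[OF assms])
  also have "\<dots> = (\<Sum>j\<in>UNIV. \<Sum>l2\<in>UNIV. \<Sum>w\<in>UNIV. \<Sum>i\<in>UNIV. \<Sum>p\<in>UNIV. \<Sum>q\<in>UNIV. \<Sum>r\<in>UNIV. \<Sum>v\<in>UNIV. \<Sum>g\<in>UNIV. \<Sum>h\<in>UNIV. ((c a l2 j * c j g h) * s g q * (m q v w * m l2 w l)) * (s h p * c b r v * m p r i * lam i))"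
    by (simp add: BB_def sum_distrib_left sum_distrib_right mult_ac)

  also have "\<dots> = (\<Sum>h\<in>UNIV. \<Sum>j\<in>UNIV. \<Sum>l2\<in>UNIV. \<Sum>w\<in>UNIV. \<Sum>i\<in>UNIV. \<Sum>p\<in>UNIV. \<Sum>q\<in>UNIV. \<Sum>r\<in>UNIV. \<Sum>v\<in>UNIV. \<Sum>g\<in>UNIV. ((c a l2 j * c j g h) * s g q * (m q v w * m l2 w l)) * (s h p * c b r v * m p r i * lam i))"
    by (rule mv9[symmetric])
  also have "\<dots> = (\<Sum>h\<in>UNIV. \<Sum>v\<in>UNIV. \<Sum>j\<in>UNIV. \<Sum>l2\<in>UNIV. \<Sum>w\<in>UNIV. \<Sum>i\<in>UNIV. \<Sum>p\<in>UNIV. \<Sum>q\<in>UNIV. \<Sum>r\<in>UNIV. \<Sum>g\<in>UNIV. ((c a l2 j * c j g h) * s g q * (m q v w * m l2 w l)) * (s h p * c b r v * m p r i * lam i))"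
    by (rule sum.cong[OF refl], rule mv7[symmetric])
  also have "\<dots> = (\<Sum>h\<in>UNIV. \<Sum>v\<in>UNIV. \<Sum>p\<in>UNIV. \<Sum>j\<in>UNIV. \<Sum>l2\<in>UNIV. \<Sum>w\<in>UNIV. \<Sum>i\<in>UNIV. \<Sum>q\<in>UNIV. \<Sum>r\<in>UNIV. \<Sum>g\<in>UNIV. ((c a l2 j * c j g h) * s g q * (m q v w * m l2 w l)) * (s h p * c b r v * m p r i * lam i))"
    by (rule sum.cong[OF refl], rule sum.cong[OF refl], rule mv4[symmetric])
  also have "\<dots> = (\<Sum>h\<in>UNIV. \<Sum>v\<in>UNIV. \<Sum>p\<in>UNIV. \<Sum>r\<in>UNIV. \<Sum>j\<in>UNIV. \<Sum>l2\<in>UNIV. \<Sum>w\<in>UNIV. \<Sum>i\<in>UNIV. \<Sum>q\<in>UNIV. \<Sum>g\<in>UNIV. ((c a l2 j * c j g h) * s g q * (m q v w * m l2 w l)) * (s h p * c b r v * m p r i * lam i))"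
    by (rule sum.cong[OF refl], rule sum.cong[OF refl], rule sum.cong[OF refl], rule mv5[symmetric])
  also have "\<dots> = (\<Sum>h\<in>UNIV. \<Sum>v\<in>UNIV. \<Sum>p\<in>UNIV. \<Sum>r\<in>UNIV. \<Sum>i\<in>UNIV. \<Sum>j\<in>UNIV. \<Sum>l2\<in>UNIV. \<Sum>w\<in>UNIV. \<Sum>q\<in>UNIV. \<Sum>g\<in>UNIV. ((c a l2 j * c j g h) * s g q * (m q v w * m l2 w l)) * (s h p * c b r v * m p r i * lam i))"
    by (rule sum.cong[OF refl], rule sum.cong[OF refl], rule sum.cong[OF refl], rule sum.cong[OF refl], rule mv3[symmetric])
  also have "\<dots> = (\<Sum>h\<in>UNIV. \<Sum>v\<in>UNIV. \<Sum>p\<in>UNIV. \<Sum>r\<in>UNIV. \<Sum>i\<in>UNIV. \<Sum>j\<in>UNIV. \<Sum>l2\<in>UNIV. \<Sum>g\<in>UNIV. \<Sum>w\<in>UNIV. \<Sum>q\<in>UNIV. ((c a l2 j * c j g h) * s g q * (m q v w * m l2 w l)) * (s h p * c b r v * m p r i * lam i))"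
    by (rule sum.cong[OF refl], rule sum.cong[OF refl], rule sum.cong[OF refl], rule sum.cong[OF refl], rule sum.cong[OF refl], rule sum.cong[OF refl], rule sum.cong[OF refl], rule mv2[symmetric])
  also have "\<dots> = (\<Sum>h\<in>UNIV. \<Sum>v\<in>UNIV. \<Sum>p\<in>UNIV. \<Sum>r\<in>UNIV. \<Sum>i\<in>UNIV. \<Sum>j\<in>UNIV. \<Sum>l2\<in>UNIV. \<Sum>g\<in>UNIV. \<Sum>q\<in>UNIV. \<Sum>w\<in>UNIV. ((c a l2 j * c j g h) * s g q * (m q v w * m l2 w l)) * (s h p * c b r v * m p r i * lam i))"
    by (rule sum.cong[OF refl], rule sum.cong[OF refl], rule sum.cong[OF refl], rule sum.cong[OF refl], rule sum.cong[OF refl], rule sum.cong[OF refl], rule sum.cong[OF refl], rule sum.cong[OF refl], rule mv1[symmetric])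
  also have "\<dots> = (\<Sum>h\<in>UNIV. \<Sum>v\<in>UNIV. \<Sum>p\<in>UNIV. \<Sum>r\<in>UNIV. \<Sum>i\<in>UNIV. (\<Sum>j\<in>UNIV. \<Sum>l2\<in>UNIV. \<Sum>g\<in>UNIV. \<Sum>q\<in>UNIV. \<Sum>w\<in>UNIV. (c a l2 j * c j g h) * s g q * (m q v w * m l2 w l)) * (s h p * c b r v * m p r i * lam i))"
    by (simp only: sum_distrib_right)
  also have "\<dots> = (\<Sum>h\<in>UNIV. \<Sum>v\<in>UNIV. \<Sum>p\<in>UNIV. \<Sum>r\<in>UNIV. \<Sum>i\<in>UNIV. ((if a = h then 1 else 0) * (if v = l then 1 else 0)) * (s h p * c b r v * m p r i * lam i))"
    by (simp only: Zlem)
  also have "\<dots> = (\<Sum>p\<in>UNIV. \<Sum>r\<in>UNIV. \<Sum>i\<in>UNIV. s a p * c b r l * m p r i * lam i)"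
    by simp
  also have "\<dots> = (\<Sum>r\<in>UNIV. \<Sum>p\<in>UNIV. \<Sum>i\<in>UNIV. s a p * c b r l * m p r i * lam i)"
    by (rule mv1)
  also have "\<dots> = (\<Sum>j\<in>UNIV. c b j l * G lam a j)"
    by (simp add: G_def sum_distrib_left mult_ac)
  finally show ?thesis by simp
qed

end

context hopf begin

definition S2 :: "'i \<Rightarrow> 'i \<Rightarrow> 'k" where "S2 i p = (\<Sum>y\<in>UNIV. s i y * s y p)"
definition Vz :: "'i \<Rightarrow> 'i \<Rightarrow> 'i \<Rightarrow> 'k" where "Vz z0 i n = (\<Sum>p\<in>UNIV. S2 i p * m p z0 n)"

lemma K2: "(\<Sum>i\<in>UNIV. \<Sum>j\<in>UNIV. c a i j * (\<Sum>x\<in>UNIV. \<Sum>p\<in>UNIV. s j x * S2 i p * m x p n)) = e a * u n"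
proof -
  have "(\<Sum>x\<in>UNIV. \<Sum>p\<in>UNIV. s j x * S2 i p * m x p n) = (\<Sum>x\<in>UNIV. \<Sum>y\<in>UNIV. \<Sum>p\<in>UNIV. s j x * (s i y * s y p) * m x p n)" for i j
  proof -
    have "(\<Sum>x\<in>UNIV. \<Sum>p\<in>UNIV. s j x * S2 i p * m x p n) = (\<Sum>x\<in>UNIV. \<Sum>p\<in>UNIV. \<Sum>y\<in>UNIV. s j x * (s i y * s y p) * m x p n)"
      by (simp add: S2_def sum_distrib_left sum_distrib_right mult_ac)
    also have "\<dots> = (\<Sum>x\<in>UNIV. \<Sum>y\<in>UNIV. \<Sum>p\<in>UNIV. s j x * (s i y * s y p) * m x p n)"
      by (rule sum.cong[OF refl], rule mv1)
    finally show ?thesis .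
  qed
  then show ?thesis using K by simp
qed

lemma VG: "Vz z0 i n * G lam j n = (\<Sum>p\<in>UNIV. \<Sum>x\<in>UNIV. \<Sum>r\<in>UNIV. (S2 i p * m p z0 n) * (s j x * (m x n r * lam r)))"
  unfolding Vz_def G_def by (simp only: sum_product) (simp only: sum_distrib_left)

lemma step2: "e k * lam z0 = (\<Sum>i\<in>UNIV. \<Sum>j\<in>UNIV. c k i j * (\<Sum>n\<in>UNIV. Vz z0 i n * G lam j n))"
proof -
  have "(\<Sum>i\<in>UNIV. \<Sum>j\<in>UNIV. c k i j * (\<Sum>n\<in>UNIV. Vz z0 i n * G lam j n)) = (\<Sum>i\<in>UNIV. \<Sum>j\<in>UNIV. \<Sum>n\<in>UNIV. \<Sum>p\<in>UNIV. \<Sum>x\<in>UNIV. \<Sum>r\<in>UNIV. c k i j * ((S2 i p * m p z0 n) * (s j x * (m x n r * lam r))))"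
    by (simp only: VG sum_distrib_left)

  also have "\<dots> = (\<Sum>i\<in>UNIV. \<Sum>j\<in>UNIV. \<Sum>p\<in>UNIV. \<Sum>n\<in>UNIV. \<Sum>x\<in>UNIV. \<Sum>r\<in>UNIV. c k i j * ((S2 i p * m p z0 n) * (s j x * (m x n r * lam r))))"
    by (rule sum.cong[OF refl], rule sum.cong[OF refl], rule mv1[symmetric])
  also have "\<dots> = (\<Sum>i\<in>UNIV. \<Sum>j\<in>UNIV. \<Sum>p\<in>UNIV. \<Sum>x\<in>UNIV. \<Sum>n\<in>UNIV. \<Sum>r\<in>UNIV. c k i j * ((S2 i p * m p z0 n) * (s j x * (m x n r * lam r))))"
    by (rule sum.cong[OF refl], rule sum.cong[OF refl], rule sum.cong[OF refl], rule mv1[symmetric])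
  also have "\<dots> = (\<Sum>i\<in>UNIV. \<Sum>j\<in>UNIV. \<Sum>p\<in>UNIV. \<Sum>x\<in>UNIV. \<Sum>r\<in>UNIV. \<Sum>n\<in>UNIV. c k i j * ((S2 i p * m p z0 n) * (s j x * (m x n r * lam r))))"
    by (rule sum.cong[OF refl], rule sum.cong[OF refl], rule sum.cong[OF refl], rule sum.cong[OF refl], rule mv1[symmetric])
  also have "\<dots> = (\<Sum>i\<in>UNIV. \<Sum>j\<in>UNIV. \<Sum>p\<in>UNIV. \<Sum>x\<in>UNIV. \<Sum>r\<in>UNIV. \<Sum>n\<in>UNIV. (c k i j * S2 i p * s j x * lam r) * (m p z0 n * m x n r))"
    by (simp add: mult_ac)
  also have "\<dots> = (\<Sum>i\<in>UNIV. \<Sum>j\<in>UNIV. \<Sum>p\<in>UNIV. \<Sum>x\<in>UNIV. \<Sum>r\<in>UNIV. (c k i j * S2 i p * s j x * lam r) * (\<Sum>n\<in>UNIV. m p z0 n * m x n r))"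
    by (simp only: sum_distrib_left)
  also have "\<dots> = (\<Sum>i\<in>UNIV. \<Sum>j\<in>UNIV. \<Sum>p\<in>UNIV. \<Sum>x\<in>UNIV. \<Sum>r\<in>UNIV. (c k i j * S2 i p * s j x * lam r) * (\<Sum>n\<in>UNIV. m x p n * m n z0 r))"
    by (simp only: assoc[symmetric])
  also have "\<dots> = (\<Sum>i\<in>UNIV. \<Sum>j\<in>UNIV. \<Sum>p\<in>UNIV. \<Sum>x\<in>UNIV. \<Sum>r\<in>UNIV. \<Sum>n\<in>UNIV. (c k i j * S2 i p * s j x * lam r) * (m x p n * m n z0 r))"
    by (simp only: sum_distrib_left)

  also have "\<dots> = (\<Sum>n\<in>UNIV. \<Sum>i\<in>UNIV. \<Sum>j\<in>UNIV. \<Sum>p\<in>UNIV. \<Sum>x\<in>UNIV. \<Sum>r\<in>UNIV. (c k i j * S2 i p * s j x * lam r) * (m x p n * m n z0 r))"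
    by (rule mv5[symmetric])
  also have "\<dots> = (\<Sum>n\<in>UNIV. \<Sum>r\<in>UNIV. \<Sum>i\<in>UNIV. \<Sum>j\<in>UNIV. \<Sum>p\<in>UNIV. \<Sum>x\<in>UNIV. (c k i j * S2 i p * s j x * lam r) * (m x p n * m n z0 r))"
    by (rule sum.cong[OF refl], rule mv4[symmetric])
  also have "\<dots> = (\<Sum>n\<in>UNIV. \<Sum>r\<in>UNIV. \<Sum>i\<in>UNIV. \<Sum>j\<in>UNIV. \<Sum>x\<in>UNIV. \<Sum>p\<in>UNIV. (c k i j * S2 i p * s j x * lam r) * (m x p n * m n z0 r))"
    by (rule sum.cong[OF refl], rule sum.cong[OF refl], rule sum.cong[OF refl], rule sum.cong[OF refl], rule mv1[symmetric])
  also have "\<dots> = (\<Sum>n\<in>UNIV. \<Sum>r\<in>UNIV. (\<Sum>i\<in>UNIV. \<Sum>j\<in>UNIV. c k i j * (\<Sum>x\<in>UNIV. \<Sum>p\<in>UNIV. s j x * S2 i p * m x p n)) * (m n z0 r * lam r))"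
    by (simp only: sum_distrib_left sum_distrib_right) (simp add: mult_ac)
  also have "\<dots> = (\<Sum>n\<in>UNIV. \<Sum>r\<in>UNIV. (e k * u n) * (m n z0 r * lam r))"
    by (simp only: K2)
  also have "\<dots> = (\<Sum>r\<in>UNIV. \<Sum>n\<in>UNIV. (e k * u n) * (m n z0 r * lam r))"
    by (rule sum.swap)
  also have "\<dots> = e k * (\<Sum>r\<in>UNIV. (\<Sum>n\<in>UNIV. u n * m n z0 r) * lam r)"
    by (simp add: sum_distrib_left sum_distrib_right mult_ac)
  also have "\<dots> = e k * lam z0"
    by (simp add: unitL)
  finally show ?thesis by simp
qed

lemma step1eq:
  assumes "RI lam"
  shows "(\<Sum>j\<in>UNIV. (\<Sum>a\<in>UNIV. h a * c a l j) * G lam j b) = (\<Sum>j\<in>UNIV. c b j l * (\<Sum>a\<in>UNIV. h a * G lam a j))"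
proof -
  have "(\<Sum>j\<in>UNIV. (\<Sum>a\<in>UNIV. h a * c a l j) * G lam j b) = (\<Sum>j\<in>UNIV. \<Sum>a\<in>UNIV. h a * (c a l j * G lam j b))"
    by (simp only: sum_distrib_right) (simp add: mult_ac)
  also have "\<dots> = (\<Sum>a\<in>UNIV. \<Sum>j\<in>UNIV. h a * (c a l j * G lam j b))"
    by (rule sum.swap)
  also have "\<dots> = (\<Sum>a\<in>UNIV. h a * (\<Sum>j\<in>UNIV. c a l j * G lam j b))"
    by (simp only: sum_distrib_left)
  also have "\<dots> = (\<Sum>a\<in>UNIV. h a * (\<Sum>j\<in>UNIV. c b j l * G lam a j))"
    by (simp only: coact[OF assms])
  also have "\<dots> = (\<Sum>a\<in>UNIV. \<Sum>j\<in>UNIV. h a * (c b j l * G lam a j))"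
    by (simp only: sum_distrib_left)
  also have "\<dots> = (\<Sum>j\<in>UNIV. \<Sum>a\<in>UNIV. h a * (c b j l * G lam a j))"
    by (rule sum.swap)
  also have "\<dots> = (\<Sum>j\<in>UNIV. c b j l * (\<Sum>a\<in>UNIV. h a * G lam a j))"
    by (simp add: sum_distrib_left mult_ac)
  finally show ?thesis .
qed

lemma NI:
  assumes ri: "RI lam" and nz: "lam z0 \<noteq> 0"
    and hyp: "\<forall>b. (\<Sum>a\<in>UNIV. h a * G lam a b) = 0"
  shows "h l = 0"
proof -
  have hyp1: "(\<Sum>j\<in>UNIV. (\<Sum>a\<in>UNIV. h a * c a l j) * G lam j b) = 0" for l b
    using hyp by (simp add: step1eq[OF ri])
  have hyp2: "(\<Sum>j2\<in>UNIV. (\<Sum>j\<in>UNIV. (\<Sum>a\<in>UNIV. h a * c a l j) * c j i j2) * G lam j2 n) = 0" for i n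
    using hyp1[of l] by (simp add: step1eq[OF ri, of "\<lambda>j. (\<Sum>a\<in>UNIV. h a * c a l j)"])
  have "h l * lam z0 = (\<Sum>a\<in>UNIV. h a * (\<Sum>k\<in>UNIV. c a l k * e k)) * lam z0"
    by (simp add: counitR)
  also have "\<dots> = (\<Sum>a\<in>UNIV. h a * (\<Sum>k\<in>UNIV. c a l k * (e k * lam z0)))"
    by (simp add: sum_distrib_left sum_distrib_right mult_ac)
  also have "\<dots> = (\<Sum>a\<in>UNIV. h a * (\<Sum>k\<in>UNIV. c a l k * (\<Sum>i\<in>UNIV. \<Sum>j\<in>UNIV. c k i j * (\<Sum>n\<in>UNIV. Vz z0 i n * G lam j n))))"
    by (simp only: step2[symmetric])
  also have "\<dots> = (\<Sum>a\<in>UNIV. \<Sum>k\<in>UNIV. \<Sum>i\<in>UNIV. \<Sum>j\<in>UNIV. \<Sum>n\<in>UNIV. h a * c a l k * c k i j * (Vz z0 i n * G lam j n))"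
    by (simp add: sum_distrib_left mult_ac)

  also have "\<dots> = (\<Sum>i\<in>UNIV. \<Sum>a\<in>UNIV. \<Sum>k\<in>UNIV. \<Sum>j\<in>UNIV. \<Sum>n\<in>UNIV. h a * c a l k * c k i j * (Vz z0 i n * G lam j n))"
    by (rule mv2[symmetric])
  also have "\<dots> = (\<Sum>i\<in>UNIV. \<Sum>n\<in>UNIV. \<Sum>a\<in>UNIV. \<Sum>k\<in>UNIV. \<Sum>j\<in>UNIV. h a * c a l k * c k i j * (Vz z0 i n * G lam j n))"
    by (rule sum.cong[OF refl], rule mv3[symmetric])
  also have "\<dots> = (\<Sum>i\<in>UNIV. \<Sum>n\<in>UNIV. \<Sum>j\<in>UNIV. \<Sum>a\<in>UNIV. \<Sum>k\<in>UNIV. h a * c a l k * c k i j * (Vz z0 i n * G lam j n))"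
    by (rule sum.cong[OF refl], rule sum.cong[OF refl], rule mv2[symmetric])
  also have "\<dots> = (\<Sum>i\<in>UNIV. \<Sum>n\<in>UNIV. \<Sum>j\<in>UNIV. \<Sum>k\<in>UNIV. \<Sum>a\<in>UNIV. h a * c a l k * c k i j * (Vz z0 i n * G lam j n))"
    by (rule sum.cong[OF refl], rule sum.cong[OF refl], rule sum.cong[OF refl], rule mv1[symmetric])
  also have "\<dots> = (\<Sum>i\<in>UNIV. \<Sum>n\<in>UNIV. \<Sum>j\<in>UNIV. \<Sum>k\<in>UNIV. \<Sum>a\<in>UNIV. Vz z0 i n * (((h a * c a l k) * c k i j) * G lam j n))"
    by (simp add: mult_ac)
  also have "\<dots> = (\<Sum>i\<in>UNIV. \<Sum>n\<in>UNIV. Vz z0 i n * (\<Sum>j\<in>UNIV. (\<Sum>k\<in>UNIV. (\<Sum>a\<in>UNIV. h a * c a l k) * c k i j) * G lam j n))"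
    by (simp only: sum_distrib_left sum_distrib_right)
  also have "\<dots> = 0" by (simp add: hyp2)
  finally show ?thesis using nz by simp
qed

lemma uniq:
  assumes ri: "RI lam" and nz: "lam z0 \<noteq> 0" and ri': "RI lam'"
    and rep: "\<forall>b. lam' b = (\<Sum>a\<in>UNIV. g a * G lam a b)"
  shows "lam' b = (\<Sum>a\<in>UNIV. g a * e a) * lam b"
proof -
  have lr: "(\<Sum>j\<in>UNIV. lam' j * c q j l) = lam' q * u l" for q l using ri' by (simp add: RI_def)
  have gc: "(\<Sum>a\<in>UNIV. g a * c a l j) = u l * g j" for l j
  proof -
    have "(\<lambda>j. (\<Sum>a\<in>UNIV. g a * c a l j) - u l * g j) j = 0"
    proof (rule NI[OF ri nz], rule allI)
      fix b
      have "(\<Sum>a\<in>UNIV. ((\<Sum>a2\<in>UNIV. g a2 * c a2 l a) - u l * g a) * G lam a b)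
          = (\<Sum>a\<in>UNIV. (\<Sum>a2\<in>UNIV. g a2 * c a2 l a) * G lam a b) - u l * (\<Sum>a\<in>UNIV. g a * G lam a b)"
        by (simp add: algebra_simps sum_subtractf sum_distrib_left)
      also have "\<dots> = (\<Sum>j\<in>UNIV. c b j l * (\<Sum>a\<in>UNIV. g a * G lam a j)) - u l * lam' b"
        by (simp add: step1eq[OF ri] rep)
      also have "\<dots> = 0" by (simp add: rep[rule_format, symmetric] lr mult.commute)
      finally show "(\<Sum>a\<in>UNIV. ((\<lambda>j. (\<Sum>a2\<in>UNIV. g a2 * c a2 l j) - u l * g j) a) * G lam a b) = 0" by simp
    qed
    then show ?thesis by simp
  qed
  have gl: "g l = u l * (\<Sum>a\<in>UNIV. g a * e a)" for l
  proof -
    have "g l = (\<Sum>a\<in>UNIV. g a * (\<Sum>j\<in>UNIV. c a l j * e j))" by (simp add: counitR)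
    also have "\<dots> = (\<Sum>j\<in>UNIV. (\<Sum>a\<in>UNIV. g a * c a l j) * e j)"
      by (simp add: sum_distrib_left sum_distrib_right mult_ac) (rule sum.swap)
    also have "\<dots> = (\<Sum>j\<in>UNIV. u l * g j * e j)" by (simp add: gc)
    also have "\<dots> = u l * (\<Sum>a\<in>UNIV. g a * e a)" by (simp add: sum_distrib_left mult_ac)
    finally show ?thesis .
  qed
  have "lam' b = (\<Sum>a\<in>UNIV. g a * G lam a b)" using rep by simp
  also have "\<dots> = (\<Sum>a\<in>UNIV. g a * e a) * (\<Sum>a\<in>UNIV. u a * G lam a b)"
    by (subst gl) (simp add: sum_distrib_left mult_ac)
  also have "(\<Sum>a\<in>UNIV. u a * G lam a b) = (\<Sum>a\<in>UNIV. \<Sum>t\<in>UNIV. u a * s a t * (\<Sum>n\<in>UNIV. m t b n * lam n))"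
    by (simp add: G_def sum_distrib_left mult_ac)
  also have "\<dots> = (\<Sum>t\<in>UNIV. \<Sum>a\<in>UNIV. u a * s a t * (\<Sum>n\<in>UNIV. m t b n * lam n))"
    by (rule sum.swap)
  also have "\<dots> = (\<Sum>t\<in>UNIV. u t * (\<Sum>n\<in>UNIV. m t b n * lam n))"
    by (simp add: F3 flip: sum_distrib_right)
  also have "\<dots> = (\<Sum>t\<in>UNIV. \<Sum>n\<in>UNIV. u t * m t b n * lam n)"
    by (simp add: sum_distrib_left mult_ac)
  also have "\<dots> = (\<Sum>n\<in>UNIV. \<Sum>t\<in>UNIV. u t * m t b n * lam n)"
    by (rule sum.swap)
  also have "\<dots> = lam b"
    by (simp add: unitL flip: sum_distrib_right)
  finally show ?thesis .
qed

end

lemma fval_bvec [simp]: "fval f (bvec q) = f q"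
  by (simp add: fval_def bvec_app)

lemma fval_add: "fval f (vadd x y) = fval f x + fval f y"
  by (simp add: fval_def vadd_def algebra_simps sum.distrib)
lemma fval_scale: "fval f (vscale c x) = c * fval f x"
  by (simp add: fval_def vscale_def sum_distrib_left mult_ac)

lemma lin_repr:
  fixes phi :: "('i::finite \<Rightarrow> 'k::field) \<Rightarrow> 'k"
  assumes add: "\<And>x y. phi (vadd x y) = phi x + phi y"
    and sc: "\<And>c x. phi (vscale c x) = c * phi x"
  shows "phi x = (\<Sum>q\<in>UNIV. x q * phi (bvec q))"
proof -
  have "phi (\<lambda>i. if i \<in> S then x i else 0) = (\<Sum>q\<in>S. x q * phi (bvec q))" if "finite S" for S
    using that
  proof (induction S rule: finite_induct)
    case empty
    have "phi (\<lambda>i. 0) = phi (vscale 0 (\<lambda>i. 0))" by (simp add: vscale_def)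
    also have "\<dots> = 0" by (simp add: sc)
    finally show ?case by simp
  next
    case (insert q S)
    have "(\<lambda>i. if i \<in> insert q S then x i else 0) = vadd (\<lambda>i. if i \<in> S then x i else 0) (vscale (x q) (bvec q))"
      using insert.hyps by (auto simp: vadd_def vscale_def bvec_app fun_eq_iff)
    then show ?case using insert by (simp add: add sc)
  qed
  from this[of UNIV] show ?thesis by simp
qed

lemma fun_id_tsub: "fun_id f (\<lambda>(i, j). \<Sum>k<n. A k i * B k j) = (\<lambda>j. \<Sum>k<n. fval f (A k) * B k j)"
  by (auto simp: fun_id_def fval_def fun_eq_iff sum_distrib_left sum_distrib_right mult_ac intro: sum.swap)

lemma id_fun_tsub: "id_fun f (\<lambda>(i, j). \<Sum>k<n. A k i * B k j) = (\<lambda>i. \<Sum>k<n. A k i * fval f (B k))"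
  by (auto simp: id_fun_def fval_def fun_eq_iff sum_distrib_left sum_distrib_right mult_ac intro: sum.swap)

lemma fun_id_add: "fun_id f (\<lambda>p. t1 p + t2 p) = (\<lambda>j. fun_id f t1 j + fun_id f t2 j)"
  by (simp add: fun_id_def algebra_simps sum.distrib)
lemma id_fun_add: "id_fun f (\<lambda>p. t1 p + t2 p) = (\<lambda>j. id_fun f t1 j + id_fun f t2 j)"
  by (simp add: id_fun_def algebra_simps sum.distrib)
lemma hcomul_add: "hcomul H (vadd y z) = (\<lambda>p. hcomul H y p + hcomul H z p)"
  by (auto simp: hcomul_def vadd_def algebra_simps sum.distrib fun_eq_iff)

context hopf begin

lemma fun_id_bvec: "fun_id lam (hcomul H (bvec q)) l = (\<Sum>i\<in>UNIV. lam i * c q i l)"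
  by (simp add: hcomul_bvec fun_id_def)
lemma id_fun_bvec: "id_fun lam (hcomul H (bvec q)) i = (\<Sum>j\<in>UNIV. c q i j * lam j)"
  by (simp add: hcomul_bvec id_fun_def)

lemma RI_from:
  assumes "\<forall>h. fun_id lam (hcomul H h) = vscale (fval lam h) (hone H)"
  shows "RI lam"
  unfolding RI_def
proof (intro allI)
  fix q l
  have "fun_id lam (hcomul H (bvec q)) l = vscale (fval lam (bvec q)) (hone H) l"
    using assms by simp
  then show "(\<Sum>i\<in>UNIV. lam i * c q i l) = lam q * u l"
    by (simp add: fun_id_bvec vscale_def hone_def)
qed

lemma Phi_surj:
  assumes ri: "RI lam" and nz: "lam z0 \<noteq> 0"
  shows "surj (\<lambda>g b. \<Sum>a\<in>UNIV. g a * G lam a b)"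
proof (rule lin_inj_surj)
  show "(\<lambda>b. \<Sum>a\<in>UNIV. (x + y) a * G lam a b) = (\<lambda>b. \<Sum>a\<in>UNIV. x a * G lam a b) + (\<lambda>b. \<Sum>a\<in>UNIV. y a * G lam a b)" for x y
    by (simp add: fun_eq_iff algebra_simps sum.distrib)
  show "(\<lambda>b. \<Sum>a\<in>UNIV. fscale c x a * G lam a b) = fscale c (\<lambda>b. \<Sum>a\<in>UNIV. x a * G lam a b)" for c x
    by (simp add: fun_eq_iff fscale_def sum_distrib_left mult_ac)
  show "inj (\<lambda>g b. \<Sum>a\<in>UNIV. g a * G lam a b)"
  proof (rule injI)
    fix x y :: "'i \<Rightarrow> 'k"
    assume eq: "(\<lambda>b. \<Sum>a\<in>UNIV. x a * G lam a b) = (\<lambda>b. \<Sum>a\<in>UNIV. y a * G lam a b)"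
    have "(\<lambda>a. x a - y a) l = 0" for l
    proof (rule NI[OF ri nz], rule allI)
      fix b
      have "(\<Sum>a\<in>UNIV. x a * G lam a b) = (\<Sum>a\<in>UNIV. y a * G lam a b)" using eq by metis
      then show "(\<Sum>a\<in>UNIV. (x a - y a) * G lam a b) = 0"
        by (simp add: algebra_simps sum_subtractf)
    qed
    then show "x = y" by (simp add: fun_eq_iff)
  qed
qed

end

lemma sub_zero: "is_subspace A \<Longrightarrow> (\<lambda>i. 0) \<in> A" by (simp add: is_subspace_def)
lemma sub_add: "is_subspace A \<Longrightarrow> x \<in> A \<Longrightarrow> y \<in> A \<Longrightarrow> vadd x y \<in> A" by (simp add: is_subspace_def)
lemma sub_scale: "is_subspace A \<Longrightarrow> x \<in> A \<Longrightarrow> vscale c x \<in> A" by (simp add: is_subspace_def)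
lemma sub_diff: "is_subspace A \<Longrightarrow> x \<in> A \<Longrightarrow> y \<in> A \<Longrightarrow> (\<lambda>i. x i - y i) \<in> A"
proof -
  assume a: "is_subspace A" "x \<in> A" "y \<in> A"
  have "vadd x (vscale (-1) y) \<in> A" using a by (simp add: sub_add sub_scale)
  moreover have "vadd x (vscale (-1) y) = (\<lambda>i. x i - y i)" by (simp add: vadd_def vscale_def)
  ultimately show ?thesis by simp
qed

lemma tensor_subE:
  assumes "t \<in> tensor_sub A"
  obtains n :: nat and a b where "\<forall>k<n. a k \<in> A \<and> b k \<in> A" "t = (\<lambda>(i, j). \<Sum>k<n. a k i * b k j)"
  using assms unfolding tensor_sub_def by blast

lemma fval_nz: "fval f x \<noteq> 0 \<Longrightarrow> \<exists>z. f z \<noteq> 0"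
proof (rule ccontr)
  assume a: "fval f x \<noteq> 0" "\<not> (\<exists>z. f z \<noteq> 0)"
  then have "f = (\<lambda>z. 0)" by auto
  then show False using a by (simp add: fval_def)
qed

lemma decomp_unique:
  assumes sA: "is_subspace A" and sC: "is_subspace C" and inter: "A \<inter> C = {(\<lambda>i. 0)}"
    and y: "y \<in> A" "y' \<in> A" and z: "z \<in> C" "z' \<in> C" and eq: "vadd y z = vadd y' z'"
  shows "y = y'"
proof -
  have e: "(\<lambda>i. y i - y' i) = (\<lambda>i. z' i - z i)"
    using eq by (auto simp: vadd_def fun_eq_iff algebra_simps dest: fun_cong)
  have "(\<lambda>i. y i - y' i) \<in> A" using sA y by (rule sub_diff)
  moreover have "(\<lambda>i. y i - y' i) \<in> C" unfolding e using sC z by (intro sub_diff)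
  ultimately have "(\<lambda>i. y i - y' i) = (\<lambda>i. 0)" using inter by blast
  then show ?thesis by (auto simp: fun_eq_iff dest: fun_cong)
qed

theorem lemma2p4:
  fixes H :: "('i::finite, 'k::field_char_0) hopf_data"
    and A C :: "('i \<Rightarrow> 'k) set"
    and a b :: "'i \<Rightarrow> 'k"
  assumes alg_closed: "\<forall>p :: 'k poly. degree p > 0 \<longrightarrow> (\<exists>x. poly p x = 0)"
    and hopf: "is_hopf H"
    and subA: "hopf_subalgebra H A"
    and subC: "subcoalgebra H C"
    and inter: "A \<inter> C = {(\<lambda>i. 0)}"
    and sum: "\<forall>x. \<exists>y\<in>A. \<exists>z\<in>C. x = vadd y z"
    and distH: "dist_grouplike H UNIV a"
    and distA: "dist_grouplike H A b"
  shows "a = b"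
proof -
  interpret hopf H by (rule hopf.intro) (rule hopf)
  have sA: "is_subspace A" using subA by (simp add: hopf_subalgebra_def)
  have sC: "is_subspace C" using subC by (simp add: subcoalgebra_def)
  have dA: "\<forall>x\<in>A. hcomul H x \<in> tensor_sub A" using subA by (simp add: hopf_subalgebra_def)
  have dC: "\<forall>x\<in>C. hcomul H x \<in> tensor_sub C" using subC by (simp add: subcoalgebra_def)
  from distH obtain lam where rl: "right_integral H UNIV lam"
    and il: "\<forall>h\<in>UNIV. id_fun lam (hcomul H h) = vscale (fval lam h) a"
    by (auto simp: dist_grouplike_def)
  from distA obtain mu where rm: "right_integral H A mu"
    and im: "\<forall>h\<in>A. id_fun mu (hcomul H h) = vscale (fval mu h) b"
    by (auto simp: dist_grouplike_def)
  have RIl: "RI lam" using rl by (intro RI_from) (simp add: right_integral_def)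
  obtain z0 where z0: "lam z0 \<noteq> 0"
  proof -
    from rl obtain h where "fval lam h \<noteq> 0" by (auto simp: right_integral_def)
    then have "\<exists>z. lam z \<noteq> 0" by (rule fval_nz)
    then show ?thesis using that by blast
  qed
  define P where "P x = (SOME y. y \<in> A \<and> (\<exists>z\<in>C. x = vadd y z))" for x
  have Pdec: "P x \<in> A \<and> (\<exists>z\<in>C. x = vadd (P x) z)" for x
  proof -
    from sum obtain y z where "y \<in> A" "z \<in> C" "x = vadd y z" by blast
    then have "\<exists>y. y \<in> A \<and> (\<exists>z\<in>C. x = vadd y z)" by blast
    then show ?thesis unfolding P_def by (rule someI_ex)
  qed
  have Peq: "P (vadd y z) = y" if yA: "y \<in> A" and zC: "z \<in> C" for y z
  proof -
    have Pd: "P (vadd y z) \<in> A" "\<exists>z'\<in>C. vadd y z = vadd (P (vadd y z)) z'"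
      using Pdec[of "vadd y z"] by simp_all
    obtain z' where z': "z' \<in> C" "vadd y z = vadd (P (vadd y z)) z'" using Pd(2) by blast
    have "y = P (vadd y z)" by (rule decomp_unique[OF sA sC inter yA Pd(1) zC z'(1) z'(2)])
    then show ?thesis by (rule sym)
  qed
  have z0A: "(\<lambda>i. 0) \<in> A" and z0C: "(\<lambda>i. 0) \<in> C" using sA sC by (simp_all add: sub_zero)
  have PA: "P y = y" if "y \<in> A" for y
    using Peq[OF that z0C] by (simp add: vadd_def)
  have PC: "P z = (\<lambda>i. 0)" if "z \<in> C" for z
    using Peq[OF z0A that] by (simp add: vadd_def)
  define phi where "phi x = fval mu (P x)" for x
  have phi_add: "phi (vadd x y) = phi x + phi y" for x y
  proof -
    obtain zx where zx: "zx \<in> C" "x = vadd (P x) zx" using Pdec by blast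
    obtain zy where zy: "zy \<in> C" "y = vadd (P y) zy" using Pdec by blast
    have "vadd x y = vadd (vadd (P x) (P y)) (vadd zx zy)"
      using zx zy by (simp add: vadd_def fun_eq_iff algebra_simps)
    moreover have "vadd (P x) (P y) \<in> A" using Pdec sA by (simp add: sub_add)
    moreover have "vadd zx zy \<in> C" using zx zy sC by (simp add: sub_add)
    ultimately have "P (vadd x y) = vadd (P x) (P y)" using Peq by simp
    then show ?thesis by (simp add: phi_def fval_add)
  qed
  have phi_sc: "phi (vscale c x) = c * phi x" for c x
  proof -
    obtain zx where zx: "zx \<in> C" "x = vadd (P x) zx" using Pdec by blast
    have "vscale c x = vadd (vscale c (P x)) (vscale c zx)"
      using zx by (simp add: vadd_def vscale_def fun_eq_iff algebra_simps)
    moreover have "vscale c (P x) \<in> A" using Pdec sA by (simp add: sub_scale)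
    moreover have "vscale c zx \<in> C" using zx sC by (simp add: sub_scale)
    ultimately have "P (vscale c x) = vscale c (P x)" using Peq by simp
    then show ?thesis by (simp add: phi_def fval_scale)
  qed
  define lam' where "lam' q = phi (bvec q)" for q
  have fl: "fval lam' x = phi x" for x
    using lin_repr[of phi x, OF phi_add phi_sc] by (simp add: fval_def lam'_def mult.commute)
  have phiA: "phi y = fval mu y" if "y \<in> A" for y using PA[OF that] by (simp add: phi_def)
  have phiC: "phi z = 0" if "z \<in> C" for z using PC[OF that] by (simp add: phi_def fval_def)
  have flA: "fval lam' y = fval mu y" if "y \<in> A" for y using fl phiA that by simp
  have flC: "fval lam' z = 0" if "z \<in> C" for z using fl phiC that by simp
  have key: "fun_id lam' (hcomul H h) = vscale (fval lam' h) (hone H) \<and>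
             id_fun lam' (hcomul H h) = vscale (fval lam' h) b" for h
  proof -
    obtain y z where yz: "y \<in> A" "z \<in> C" "h = vadd y z" using sum by blast
    have "hcomul H y \<in> tensor_sub A" using dA yz by blast
    then obtain n :: nat and Ay By where AB: "\<forall>k<n. Ay k \<in> A \<and> By k \<in> A"
      and hy: "hcomul H y = (\<lambda>(i, j). \<Sum>k<n. Ay k i * By k j)"
      by (rule tensor_subE)
    have "hcomul H z \<in> tensor_sub C" using dC yz by blast
    then obtain n' :: nat and Cz Dz where CD: "\<forall>k<n'. Cz k \<in> C \<and> Dz k \<in> C"
      and hz: "hcomul H z = (\<lambda>(i, j). \<Sum>k<n'. Cz k i * Dz k j)"
      by (rule tensor_subE)
    have fh: "fval lam' h = fval mu y"
      using yz by (simp add: fl phi_add phiA phiC)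
    have "fun_id lam' (hcomul H y) = fun_id mu (hcomul H y)"
      unfolding hy fun_id_tsub using AB flA by simp
    also have "\<dots> = vscale (fval mu y) (hone H)" using rm yz by (simp add: right_integral_def)
    finally have f1: "fun_id lam' (hcomul H y) = vscale (fval mu y) (hone H)" .
    have f2: "fun_id lam' (hcomul H z) = (\<lambda>j. 0)"
      unfolding hz fun_id_tsub using CD flC by simp
    have "id_fun lam' (hcomul H y) = id_fun mu (hcomul H y)"
      unfolding hy id_fun_tsub using AB flA by simp
    also have "\<dots> = vscale (fval mu y) b" using im yz by simp
    finally have g1: "id_fun lam' (hcomul H y) = vscale (fval mu y) b" .
    have g2: "id_fun lam' (hcomul H z) = (\<lambda>j. 0)"
      unfolding hz id_fun_tsub using CD flC by simp
    show ?thesis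
      using yz f1 f2 g1 g2 fh by (simp add: hcomul_add fun_id_add id_fun_add)
  qed
  have RIl': "RI lam'" using key by (intro RI_from) simp
  have nz': "\<exists>q. lam' q \<noteq> 0"
  proof -
    from rm obtain h where h: "h \<in> A" "fval mu h \<noteq> 0" by (auto simp: right_integral_def)
    then have "fval lam' h \<noteq> 0" using flA by simp
    then show ?thesis by (rule fval_nz)
  qed
  obtain g where g0: "lam' = (\<lambda>g b. \<Sum>a\<in>UNIV. g a * G lam a b) g"
    using surjD[OF Phi_surj[OF RIl z0]] by blast
  have g: "lam' = (\<lambda>b. \<Sum>a\<in>UNIV. g a * G lam a b)" using g0 by simp
  define kap where "kap = (\<Sum>a\<in>UNIV. g a * e a)"
  have lk: "lam' q = kap * lam q" for q
    unfolding kap_def by (rule uniq[OF RIl z0 RIl']) (simp add: g)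
  have kap: "kap \<noteq> 0" using nz' lk by auto
  show "a = b"
  proof
    fix i
    have "id_fun lam (hcomul H (bvec z0)) i = vscale (fval lam (bvec z0)) a i" using il by simp
    then have e1: "(\<Sum>j\<in>UNIV. c z0 i j * lam j) = lam z0 * a i"
      by (simp add: id_fun_bvec vscale_def)
    have "id_fun lam' (hcomul H (bvec z0)) i = vscale (fval lam' (bvec z0)) b i" using key by simp
    then have e2: "(\<Sum>j\<in>UNIV. c z0 i j * lam' j) = lam' z0 * b i"
      by (simp add: id_fun_bvec vscale_def)
    have "(\<Sum>j\<in>UNIV. c z0 i j * lam' j) = kap * (\<Sum>j\<in>UNIV. c z0 i j * lam j)"
      by (simp add: lk sum_distrib_left mult_ac)
    then have "kap * (lam z0 * a i) = kap * lam z0 * b i" using e1 e2 lk by simp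
    then show "a i = b i" using kap z0 by simp
  qed
qed


end
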